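(* Let $k>l>0$ be coprime integers and $\lambda=\lambda_{k,l}$. Then the horizontal maximal cylinders of $X_\lambda$ form a cylinder decomposition, and the Veech group of $X_\lambda$ contains the parabolic element $$\begin{pmatrix}1&k(1+\lambda)\\0&1\end{pmatrix}.$$ It is the derivative of an affine homeomorphism that acts as the $k$-th power of a Dehn twist on the bottom horizontal cylinder (height $1$, circumference $1+\lambda$), and as the $l$-th power of a Dehn twist on each other horizontal cylinder (height $\lambda^{n}$, circumference $\lambda^{n-1}+\lambda^n+\lambda^{n+1}$, for $n\ge1$).
   Context: Notation: for $\lambda>0$ put $s_{-1}=0$ and $s_n=\sum_{i=0}^{n}\lambda^i$ for $n\ge 0$. Let $L_\lambda$ be the infinite polygonal path with consecutive vertices $(0,0),(s_0,0)$ and then, for $n\ge1$, the two vertices $(s_n,s_{n-2})$ and $(s_n,s_{n-1})$. Let $U_\lambda$ be its reflection in the line $y=x$. The \emph{ladder surface} $X_\lambda$ is the translation surface obtained from the open region bounded by $L_\lambda$ and $U_\lambda$ by identifying, via translation, each edge of $L_\lambda$ with the edge of $U_\lambda$ that is parallel to it and of the same length. Vertices are not points of $X_\lambda$. For coprime integers $k>l>0$, $\lambda_{k,l}$ denotes the positive solution of $k(\lambda+1)=l(\lambda^{-1}+1+\lambda)$. A cylinder of circumference $w$ and height $h$ is an open subset isometric to $\mathbb{R}/w\mathbb{Z}\times(0,h)$. A cylinder decomposition is a family of pairwise disjoint maximal cylinders whose closures cover the surface. An affine homeomorphism is one that is locally of the form $z\mapsto Az+t$ in translation charts; the matrix $A$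 is its derivative. The Veech group is the image in $\mathrm{PSL}(2,\mathbb{R})$ of the derivatives of orientation-preserving affine homeomorphisms of $X_\lambda$. *)

theory Defs
  imports "HOL-Analysis.Analysis"
begin

definition ladder_lambda :: "int \<Rightarrow> int \<Rightarrow> real" where
  "ladder_lambda k l = (THE x. 0 < x \<and>
      real_of_int k * (x + 1) = real_of_int l * (inverse x + 1 + x))"

text \<open>s n = sum_{i=0}^n lm^i for n >= 0, and s (-1) = 0 as in the paper.
  The value s (-2) = 0 is only a notational convenience used below to write
  the first edges uniformly.\<close>
definition sseq :: "real \<Rightarrow> int \<Rightarrow> real" where
  "sseq lm n = (if n < 0 then 0 else (\<Sum>i\<le>nat n. lm ^ i))"

definition pt :: "real \<Rightarrow> real \<Rightarrow> real^2" where
  "pt x y = vector [x, y]"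

text \<open>The open region bounded by the staircase L (vertices (0,0),(s_0,0),
  (s_n,s_{n-2}),(s_n,s_{n-1})) and its mirror image U: a point (x,y) lies above L iff
  s_{n-1} <= x < s_n and y > s_{n-2} for some n, and below U symmetrically.\<close>
definition ladder_region :: "real \<Rightarrow> (real^2) set" where
  "ladder_region lm =
     {p. 0 < p$1 \<and> 0 < p$2 \<and>
         (\<exists>n::nat. sseq lm (int n - 1) \<le> p$1 \<and> p$1 < sseq lm (int n) \<and> sseq lm (int n - 2) < p$2) \<and>
         (\<exists>m::nat. sseq lm (int m - 1) \<le> p$2 \<and> p$2 < sseq lm (int m) \<and> sseq lm (int m - 2) < p$1)}"

text \<open>Horizontal edges of L (open segments, vertices removed): the edge of length lm^n,
  from (s_{n-1}, s_{n-2}) to (s_n, s_{n-2}) (for n = 0: from (0,0) to (1,0)).\<close>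
definition hedge :: "real \<Rightarrow> nat \<Rightarrow> (real^2) set" where
  "hedge lm n = {pt x (sseq lm (int n - 2)) | x. sseq lm (int n - 1) < x \<and> x < sseq lm (int n)}"

text \<open>Vertical edges of L, n >= 1: from (s_n, s_{n-2}) to (s_n, s_{n-1}), length lm^(n-1).\<close>
definition vedge :: "real \<Rightarrow> nat \<Rightarrow> (real^2) set" where
  "vedge lm n = {pt (sseq lm (int n)) y | y. sseq lm (int n - 2) < y \<and> y < sseq lm (int n - 1)}"

text \<open>Edge identifications: the horizontal L-edge of length lm^n is identified by
  translation with the horizontal U-edge of length lm^n (from (s_{n-1},s_{n+1}) to
  (s_n,s_{n+1})); the vertical L-edge of length lm^(n-1) (n >= 1) with the vertical
  U-edge of length lm^(n-1) (at x = s_{n-3}). glued lm p q: p on an edge of L is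
  identified with q on the corresponding edge of U.\<close>
definition glued :: "real \<Rightarrow> real^2 \<Rightarrow> real^2 \<Rightarrow> bool" where
  "glued lm p q \<longleftrightarrow>
     (\<exists>n::nat. p \<in> hedge lm n \<and> q = p + pt 0 (sseq lm (int n + 1) - sseq lm (int n - 2))) \<or>
     (\<exists>n::nat. 1 \<le> n \<and> p \<in> vedge lm n \<and> q = p + pt (sseq lm (int n - 3) - sseq lm (int n)) 0)"

text \<open>Points of X_lambda, each represented by a point of the region or of an (open)
  edge of L; a point on an edge of U is represented by its partner on L.\<close>
definition ladder_X :: "real \<Rightarrow> (real^2) set" where
  "ladder_X lm = ladder_region lm \<union> (\<Union>n. hedge lm n) \<union> (\<Union>n\<in>{1..}. vedge lm n)"

definition reps :: "real \<Rightarrow> real^2 \<Rightarrow> (real^2) set" where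
  "reps lm x = insert x {q. glued lm x q}"

text \<open>Quotient topology on X_lambda (open sets have open preimage in the glued domain).\<close>
definition ladder_open :: "real \<Rightarrow> (real^2) set \<Rightarrow> bool" where
  "ladder_open lm U \<longleftrightarrow> U \<subseteq> ladder_X lm \<and>
     (\<forall>x\<in>U. \<forall>d\<in>reps lm x. \<exists>e>0. \<forall>y\<in>ladder_X lm. \<forall>d'\<in>reps lm y. norm (d' - d) < e \<longrightarrow> y \<in> U)"

lemma istopology_ladder_open: "istopology (ladder_open lm)"
  unfolding istopology_def
proof (intro conjI allI impI)
  fix S T assume S: "ladder_open lm S" and T: "ladder_open lm T"
  show "ladder_open lm (S \<inter> T)"
    unfolding ladder_open_def
  proof (intro conjI ballI)
    show "S \<inter> T \<subseteq> ladder_X lm" using S unfolding ladder_open_def by blast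
  next
    fix x d assume x: "x \<in> S \<inter> T" and d: "d \<in> reps lm x"
    obtain e1 where e1: "e1 > 0" "\<forall>y\<in>ladder_X lm. \<forall>d'\<in>reps lm y. norm (d' - d) < e1 \<longrightarrow> y \<in> S"
      using S x d unfolding ladder_open_def by blast
    obtain e2 where e2: "e2 > 0" "\<forall>y\<in>ladder_X lm. \<forall>d'\<in>reps lm y. norm (d' - d) < e2 \<longrightarrow> y \<in> T"
      using T x d unfolding ladder_open_def by blast
    show "\<exists>e>0. \<forall>y\<in>ladder_X lm. \<forall>d'\<in>reps lm y. norm (d' - d) < e \<longrightarrow> y \<in> S \<inter> T"
      using e1 e2 by (intro exI[of _ "min e1 e2"]) auto
  qed
next
  fix K assume K: "\<forall>S\<in>K. ladder_open lm S"
  show "ladder_open lm (\<Union>K)"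
    unfolding ladder_open_def
  proof (intro conjI ballI)
    show "\<Union>K \<subseteq> ladder_X lm" using K unfolding ladder_open_def by blast
  next
    fix x d assume "x \<in> \<Union>K" and d: "d \<in> reps lm x"
    then obtain S where S: "S \<in> K" "x \<in> S" by blast
    then obtain e where "e > 0" "\<forall>y\<in>ladder_X lm. \<forall>d'\<in>reps lm y. norm (d' - d) < e \<longrightarrow> y \<in> S"
      using K d unfolding ladder_open_def by blast
    then show "\<exists>e>0. \<forall>y\<in>ladder_X lm. \<forall>d'\<in>reps lm y. norm (d' - d) < e \<longrightarrow> y \<in> \<Union>K"
      using S by blast
  qed
qed

definition ladder_top :: "real \<Rightarrow> (real^2) topology" where
  "ladder_top lm = topology (ladder_open lm)"

text \<open>f is locally of the form z |-> A z + t in the translation charts of X_lambda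
  (charts are given by the plane representatives of points).\<close>
definition locally_affine :: "real \<Rightarrow> real^2^2 \<Rightarrow> (real^2 \<Rightarrow> real^2) \<Rightarrow> bool" where
  "locally_affine lm A f \<longleftrightarrow>
     (\<forall>x\<in>ladder_X lm. \<forall>d\<in>reps lm x. \<exists>e>0. \<forall>y\<in>ladder_X lm. \<forall>d'\<in>reps lm y.
        norm (d' - d) < e \<longrightarrow>
        (\<exists>r\<in>reps lm (f x). \<exists>r'\<in>reps lm (f y). r' - r = A *v (d' - d)))"

definition affine_homeo :: "real \<Rightarrow> real^2^2 \<Rightarrow> (real^2 \<Rightarrow> real^2) \<Rightarrow> bool" where
  "affine_homeo lm A f \<longleftrightarrow>
     homeomorphic_map (ladder_top lm) (ladder_top lm) f \<and> locally_affine lm A f"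

text \<open>Veech group: derivatives of orientation-preserving affine homeomorphisms, taken in
  SL(2,R); an element of PSL(2,R) represented by A belongs to it iff A or -A does.\<close>
definition veech_group :: "real \<Rightarrow> (real^2^2) set" where
  "veech_group lm = {A. det A = 1 \<and> (\<exists>f. affine_homeo lm A f)}"

definition mat2 :: "real \<Rightarrow> real \<Rightarrow> real \<Rightarrow> real \<Rightarrow> real^2^2" where
  "mat2 a b c d = vector [vector [a, b], vector [c, d]]"

text \<open>phi parametrizes C as a horizontal cylinder of circumference w and height h:
  phi : R x (0,h) -> X_lambda is w-periodic in the first variable, injective modulo w,
  a translation in charts (hence an isometry of R/wZ x (0,h) onto C), with image C.\<close>
definition hcyl_param ::
  "real \<Rightarrow> (real \<Rightarrow> real \<Rightarrow> real^2) \<Rightarrow> real \<Rightarrow> real \<Rightarrow> (real^2) set \<Rightarrow> bool" where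
  "hcyl_param lm \<phi> w h C \<longleftrightarrow> 0 < w \<and> 0 < h \<and>
     C = {\<phi> t s | t s. 0 < s \<and> s < h} \<and>
     C \<subseteq> ladder_X lm \<and>
     (\<forall>t s. 0 < s \<and> s < h \<longrightarrow> \<phi> (t + w) s = \<phi> t s) \<and>
     (\<forall>t s t' s'. 0 < s \<and> s < h \<and> 0 < s' \<and> s' < h \<and> \<phi> t s = \<phi> t' s' \<longrightarrow>
         s = s' \<and> (\<exists>j::int. t' = t + real_of_int j * w)) \<and>
     (\<forall>t s. 0 < s \<and> s < h \<longrightarrow>
        (\<exists>e>0. \<forall>t' s'. 0 < s' \<and> s' < h \<and> norm (pt (t' - t) (s' - s)) < e \<longrightarrow>
           (\<exists>r\<in>reps lm (\<phi> t s). \<exists>r'\<in>reps lm (\<phi> t' s'). r' - r = pt (t' - t) (s' - s))))"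

definition is_hcyl :: "real \<Rightarrow> (real^2) set \<Rightarrow> bool" where
  "is_hcyl lm C \<longleftrightarrow> (\<exists>\<phi> w h. hcyl_param lm \<phi> w h C)"

definition max_hcyl :: "real \<Rightarrow> (real^2) set \<Rightarrow> bool" where
  "max_hcyl lm C \<longleftrightarrow> is_hcyl lm C \<and> (\<forall>C'. is_hcyl lm C' \<and> C \<subseteq> C' \<longrightarrow> C' = C)"

definition dehn_twist_power ::
  "real \<Rightarrow> (real^2 \<Rightarrow> real^2) \<Rightarrow> int \<Rightarrow> (real^2) set \<Rightarrow> real \<Rightarrow> real \<Rightarrow> bool" where
  "dehn_twist_power lm f m C w h \<longleftrightarrow>
     (\<exists>\<phi>. hcyl_param lm \<phi> w h C \<and>
        (\<forall>t s. 0 < s \<and> s < h \<longrightarrow> f (\<phi> t s) = \<phi> (t + real_of_int m * w * s / h) s))"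

definition hstrip :: "real \<Rightarrow> nat \<Rightarrow> (real^2) set" where
  "hstrip lm n = {p \<in> ladder_X lm. sseq lm (int n - 1) < p$2 \<and> p$2 < sseq lm (int n)}"

end

theory Submission
  imports Defs
begin


lemma pt_nth1[simp]: "pt x y $ 1 = x" and pt_nth2[simp]: "pt x y $ 2 = y"
  by (simp_all add: pt_def)

lemma pt_eq_iff: "pt a b = pt c d \<longleftrightarrow> a = c \<and> b = d"
  by (metis pt_nth1 pt_nth2)

lemma vec2_eqI: "(p::real^2) $ 1 = q $ 1 \<Longrightarrow> p $ 2 = q $ 2 \<Longrightarrow> p = q"
  by (simp add: vec_eq_iff forall_2)

lemma pt_add[simp]: "pt a b + pt c d = pt (a + c) (b + d)"
  by (rule vec2_eqI) simp_all
lemma pt_diff[simp]: "pt a b - pt c d = pt (a - c) (b - d)"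
  by (rule vec2_eqI) simp_all
lemma pt_of: "p = pt (p$1) (p$2)"
  by (rule vec2_eqI) simp_all
lemma diff_pt: "(p::real^2) - q = pt (p$1 - q$1) (p$2 - q$2)"
  by (rule vec2_eqI) simp_all

lemma norm_ge1: "\<bar>(p::real^2)$1\<bar> \<le> norm p" and norm_ge2: "\<bar>(p::real^2)$2\<bar> \<le> norm p"
  by (rule component_le_norm_cart)+
lemma norm_le_sum: "norm (p::real^2) \<le> \<bar>p$1\<bar> + \<bar>p$2\<bar>"
  using norm_le_l1_cart[of p] by (simp add: sum_2)
lemma norm_pt_ge1: "\<bar>a\<bar> \<le> norm (pt a b)" and norm_pt_ge2: "\<bar>b\<bar> \<le> norm (pt a b)"
  using norm_ge1[of "pt a b"] norm_ge2[of "pt a b"] by simp_all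
lemma norm_pt_0: "norm (pt 0 b) = \<bar>b\<bar>"
proof -
  have "norm (pt 0 b) \<le> \<bar>b\<bar>" using norm_le_sum[of "pt 0 b"] by simp
  with norm_pt_ge2[where a=0 and b=b] show ?thesis by linarith
qed

lemma mat2_mult: "mat2 a b c d *v v = pt (a * v$1 + b * v$2) (c * v$1 + d * v$2)"
  by (rule vec2_eqI) (simp_all add: mat2_def matrix_vector_mult_def sum_2)
lemma det_mat2: "det (mat2 a b c d) = a * d - b * c"
  by (simp add: det_2 mat2_def)

lemma shear_bound: "norm (mat2 1 c 0 1 *v v) \<le> (2 + \<bar>c\<bar>) * norm v"
proof -
  have "norm (mat2 1 c 0 1 *v v) \<le> \<bar>v$1 + c * v$2\<bar> + \<bar>v$2\<bar>"
    using norm_le_sum[of "mat2 1 c 0 1 *v v"] by (simp add: mat2_mult)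
  also have "\<dots> \<le> \<bar>v$1\<bar> + \<bar>c\<bar> * \<bar>v$2\<bar> + \<bar>v$2\<bar>"
    by (simp add: abs_mult abs_triangle_ineq[THEN order_trans])
  also have "\<dots> \<le> norm v + \<bar>c\<bar> * norm v + norm v"
    using norm_ge1[of v] norm_ge2[of v] by (intro add_mono mult_left_mono) auto
  finally show ?thesis by (simp add: algebra_simps)
qed

lemma shear_nth1: "(mat2 1 c 0 1 *v v) $ 1 = v$1 + c * v$2"
  and shear_nth2: "(mat2 1 c 0 1 *v v) $ 2 = v$2"
  by (simp_all add: mat2_mult)

lemma sseq_neg: "j < 0 \<Longrightarrow> sseq lm j = 0" by (simp add: sseq_def)

lemma sseq_step: "0 \<le> j \<Longrightarrow> sseq lm j = sseq lm (j - 1) + lm ^ nat j"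
proof -
  assume j: "0 \<le> j"
  show ?thesis
  proof (cases "j = 0")
    case True then show ?thesis by (simp add: sseq_def)
  next
    case False
    then have "nat j = Suc (nat (j - 1))" using j by simp
    then show ?thesis using j False by (simp add: sseq_def)
  qed
qed

locale ladder = fixes lm :: real assumes lm_pos: "0 < lm"
begin

abbreviation S where "S \<equiv> sseq lm"

lemma S_mono: "i \<le> j \<Longrightarrow> S i \<le> S j"
proof (induction j rule: int_ge_induct)
  case base then show ?case by simp
next
  case (step j)
  have "S j \<le> S (j + 1)"
  proof (cases "0 \<le> j + 1")
    case True then show ?thesis using sseq_step[of "j+1" lm] lm_pos by simp
  next
    case False then show ?thesis by (simp add: sseq_neg)
  qed
  then show ?case using step by linarith
qed

lemma S_nonneg: "0 \<le> S j"
  using S_mono[of "-1" j] by (cases "j \<le> -1") (auto simp: sseq_neg)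

lemma S_strict: "-1 \<le> i \<Longrightarrow> i < j \<Longrightarrow> S i < S j"
proof -
  assume i: "-1 \<le> i" and ij: "i < j"
  have "S i \<le> S (j - 1)" using S_mono ij by simp
  moreover have "S j = S (j - 1) + lm ^ nat j" using sseq_step[of j lm] i ij by simp
  moreover have "0 < lm ^ nat j" using lm_pos by simp
  ultimately show ?thesis by linarith
qed

lemma S_less_iff: "-1 \<le> i \<Longrightarrow> S i < S j \<longleftrightarrow> i < j"
  by (meson S_mono S_strict not_less)
lemma S_le_iff: "-1 \<le> j \<Longrightarrow> S i \<le> S j \<longleftrightarrow> i \<le> j"
  by (meson S_mono S_strict not_less)
lemma S_inj: "-1 \<le> i \<Longrightarrow> -1 \<le> j \<Longrightarrow> S i = S j \<longleftrightarrow> i = j"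
  by (metis S_strict less_irrefl linorder_neqE)
lemma S_m1: "S (-1) = 0" and S_m2: "S (-2) = 0" by (simp_all add: sseq_neg)
lemma S_max: "S j = S (max j (-1))" by (cases "j < -1") (auto simp: sseq_neg max_def)

lemma S_diff: "0 \<le> j \<Longrightarrow> S j - S (j - 1) = lm ^ nat j"
  using sseq_step[of j lm] by simp

end


definition rr :: "real \<Rightarrow> real \<Rightarrow> real" where
  "rr w t = t - w * of_int (ceiling (t / w)) + w"

lemma rr_range: assumes "0 < w" shows "0 < rr w t" "rr w t \<le> w"
proof -
  have "t / w \<le> of_int (ceiling (t / w))" "of_int (ceiling (t / w)) < t / w + 1"
    by linarith+
  have "w * (t / w) \<le> w * of_int (ceiling (t / w))"
    using assms by (intro mult_left_mono) auto
  then have "t \<le> w * of_int (ceiling (t / w))" using assms by simp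
  moreover have "w * of_int (ceiling (t / w)) < t + w"
    using assms \<open>of_int (ceiling (t / w)) < t / w + 1\<close> by (simp add: field_simps)
  ultimately have "t \<le> w * of_int (ceiling (t / w))" "w * of_int (ceiling (t / w)) < t + w" by auto
  then show "0 < rr w t" "rr w t \<le> w" unfolding rr_def by linarith+
qed

lemma rr_cong: "\<exists>j::int. rr w t = t + of_int j * w"
  unfolding rr_def by (rule exI[of _ "1 - ceiling (t / w)"]) (simp add: algebra_simps)

lemma rr_unique: assumes "0 < w" "0 < x" "x \<le> w" "x = t + of_int j * w"
  shows "rr w t = x"
proof -
  have "t / w = x / w - of_int j" using assms by (simp add: field_simps)
  moreover have "0 < x / w" "x / w \<le> 1" using assms by (auto simp: field_simps)
  ultimately have "ceiling (t / w) = 1 - j"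
    by (intro ceiling_unique) auto
  then have "of_int (ceiling (t / w)) = 1 - (of_int j :: real)" by simp
  then have "w * of_int (ceiling (t / w)) = w - w * of_int j"
    using arg_cong[of _ _ "\<lambda>z. w * z"] by (simp add: right_diff_distrib)
  then show ?thesis using assms unfolding rr_def by (simp add: algebra_simps)
qed

lemma rr_shift: assumes "0 < w" shows "rr w (t + of_int m * w) = rr w t"
proof -
  obtain j where j: "rr w t = t + of_int j * w" using rr_cong by blast
  have "rr w t = (t + of_int m * w) + of_int (j - m) * w" by (simp add: j algebra_simps)
  then show ?thesis using rr_unique[OF assms rr_range(1)[OF assms] rr_range(2)[OF assms]] by metis
qed

lemma rr_rr: assumes "0 < w" shows "rr w (rr w t + u) = rr w (t + u)"
proof -
  obtain j where j: "rr w t = t + of_int j * w" using rr_cong by blast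
  show ?thesis using rr_shift[OF assms, of "t + u" j] by (simp add: j algebra_simps)
qed

definition wid :: "real \<Rightarrow> nat \<Rightarrow> real" where
  "wid lm n = sseq lm (int n + 1) - sseq lm (int n - 2)"
definition hgt :: "real \<Rightarrow> nat \<Rightarrow> real" where
  "hgt lm n = sseq lm (int n) - sseq lm (int n - 1)"
definition phi :: "real \<Rightarrow> nat \<Rightarrow> real \<Rightarrow> real \<Rightarrow> real^2" where
  "phi lm n t s = pt (sseq lm (int n - 2) + rr (wid lm n) t) (sseq lm (int n - 1) + s)"

definition slev :: "real \<Rightarrow> real \<Rightarrow> bool" where
  "slev lm y \<longleftrightarrow> (\<exists>j::int. -1 \<le> j \<and> y = sseq lm j)"

context ladder begin

lemma wid_pos: "0 < wid lm n"
  unfolding wid_def using S_mono[of "int n - 2" "int n - 1"] S_strict[of "int n - 1" "int n + 1"] by simp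
lemma hgt_pos: "0 < hgt lm n" unfolding hgt_def using S_strict[of "int n - 1" "int n"] by simp

lemma idx_exists:
  assumes "0 \<le> x" "x < S (int N)"
  shows "\<exists>n::nat. n \<le> N \<and> S (int n - 1) \<le> x \<and> x < S (int n)"
proof -
  define n where "n = (LEAST n::nat. x < S (int n))"
  have "x < S (int n)" unfolding n_def by (rule LeastI[of _ N]) (rule assms(2))
  moreover have "n \<le> N" unfolding n_def by (rule Least_le) (rule assms(2))
  moreover have "S (int n - 1) \<le> x"
  proof (cases n)
    case 0 then show ?thesis using assms by (simp add: S_m1)
  next
    case (Suc m)
    have "\<not> x < S (int m)" using not_less_Least[of m "\<lambda>n. x < S (int n)"] Suc n_def by simp
    then show ?thesis using Suc by simp
  qed
  ultimately show ?thesis by blast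
qed

lemma region_strip:
  assumes "S (int n - 1) < y" "y < S (int n)" "S (int n - 2) < x" "x < S (int n + 1)"
  shows "pt x y \<in> ladder_region lm"
proof -
  have x0: "0 < x" using assms(3) S_nonneg[of "int n - 2"] by linarith
  have y0: "0 < y" using assms(1) S_nonneg[of "int n - 1"] by linarith
  obtain n' where n': "n' \<le> n + 1" "S (int n' - 1) \<le> x" "x < S (int n')"
    using idx_exists[of x "n+1"] x0 assms(4) by (auto simp: add.commute)
  have "S (int n' - 2) \<le> S (int n - 1)" using n'(1) by (intro S_mono) simp
  then have "S (int n' - 2) < y" using assms(1) by linarith
  then have A: "\<exists>n::nat. S (int n - 1) \<le> x \<and> x < S (int n) \<and> S (int n - 2) < y" using n' by blast
  have B: "\<exists>m::nat. S (int m - 1) \<le> y \<and> y < S (int m) \<and> S (int m - 2) < x"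
    using assms by (intro exI[of _ n]) auto
  show ?thesis unfolding ladder_region_def using x0 y0 A B by simp
qed

lemma region_line:
  assumes "y = S (int n)" "S (int n - 1) < x" "x < S (int n + 1)"
  shows "pt x y \<in> ladder_region lm"
proof -
  have x0: "0 < x" using assms(2) S_nonneg[of "int n - 1"] by linarith
  have y0: "0 < y" using assms(1) S_strict[of "-1" "int n"] S_m1 by simp
  obtain n' where n': "n' \<le> n + 1" "S (int n' - 1) \<le> x" "x < S (int n')"
    using idx_exists[of x "n+1"] x0 assms(3) by (auto simp: add.commute)
  have "S (int n' - 2) \<le> S (int n - 1)" using n'(1) by (intro S_mono) simp
  moreover have "S (int n - 1) < S (int n)" by (rule S_strict) auto
  ultimately have "S (int n' - 2) < y" using assms(1) by linarith
  moreover have "S (int (Suc n) - 1) \<le> y \<and> y < S (int (Suc n)) \<and> S (int (Suc n) - 2) < x"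
    using assms S_strict[of "int n" "int n + 1"] by (simp add: add.commute)
  ultimately have A: "\<exists>n::nat. S (int n - 1) \<le> x \<and> x < S (int n) \<and> S (int n - 2) < y"
    and B: "\<exists>m::nat. S (int m - 1) \<le> y \<and> y < S (int m) \<and> S (int m - 2) < x"
    using n' by blast+
  show ?thesis unfolding ladder_region_def using x0 y0 A B by simp
qed

lemma region_cases:
  assumes "p \<in> ladder_region lm"
  shows "(\<exists>n::nat. S (int n - 1) < p$2 \<and> p$2 < S (int n) \<and> S (int n - 2) < p$1 \<and> p$1 < S (int n + 1))
       \<or> (\<exists>n::nat. p$2 = S (int n) \<and> S (int n - 1) < p$1 \<and> p$1 < S (int n + 1))"
proof -
  from assms obtain n m :: nat where
    n: "S (int n - 1) \<le> p$1" "p$1 < S (int n)" "S (int n - 2) < p$2" and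
    m: "S (int m - 1) \<le> p$2" "p$2 < S (int m)" "S (int m - 2) < p$1" and pos: "0 < p$2"
    unfolding ladder_region_def by blast
  have "S (int n - 2) < S (int m)" using n(3) m(2) by linarith
  then have "int n - 2 < int m" using S_less_iff[of "int m" "int n - 2"] by (meson S_mono not_less)
  show ?thesis
  proof (cases "S (int m - 1) < p$2")
    case True
    have "S (int n) \<le> S (int m + 1)" using \<open>int n - 2 < int m\<close> by (intro S_mono) simp
    then show ?thesis using True m n by (intro disjI1 exI[of _ m]) auto
  next
    case False
    then have eq: "p$2 = S (int m - 1)" using m(1) by simp
    have "m \<noteq> 0" using eq pos by (cases m) (auto simp: S_m1)
    then obtain j where j: "m = Suc j" by (cases m) auto
    have "S (int n - 2) < S (int m - 1)" using n(3) eq by simp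
    then have "int n - 2 < int m - 1" by (meson S_mono not_less)
    then have "S (int n) \<le> S (int m)" by (intro S_mono) simp
    then show ?thesis using eq m n j by (intro disjI2 exI[of _ j]) (auto simp: add.commute)
  qed
qed

lemma hedge_iff: "p \<in> hedge lm n \<longleftrightarrow> p$2 = S (int n - 2) \<and> S (int n - 1) < p$1 \<and> p$1 < S (int n)"
  unfolding hedge_def
  apply (rule iffI)
   apply force
  apply (rule CollectI, rule exI[of _ "p$1"]) using pt_of[of p] by simp
lemma vedge_iff: "p \<in> vedge lm n \<longleftrightarrow> p$1 = S (int n) \<and> S (int n - 2) < p$2 \<and> p$2 < S (int n - 1)"
  unfolding vedge_def
  apply (rule iffI)
   apply force
  apply (rule CollectI, rule exI[of _ "p$2"]) using pt_of[of p] by simp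

lemma strip_not_slev: "S (int n - 1) < y \<Longrightarrow> y < S (int n) \<Longrightarrow> \<not> slev lm y"
proof
  assume a: "S (int n - 1) < y" "y < S (int n)" and "slev lm y"
  then obtain j where j: "-1 \<le> j" "y = S j" unfolding slev_def by blast
  have "int n - 1 < j" using a(1) j S_mono[of j "int n - 1"] by (meson not_less)
  then have "S (int n) \<le> S j" by (intro S_mono) simp
  then show False using a j by simp
qed

lemma strip_unique: "-1 \<le> a \<Longrightarrow> -1 \<le> b \<Longrightarrow> S a < y \<Longrightarrow> y < S (a + 1) \<Longrightarrow> S b < y \<Longrightarrow> y < S (b + 1) \<Longrightarrow> a = b"
proof (rule ccontr)
  assume h: "-1 \<le> a" "-1 \<le> b" "S a < y" "y < S (a + 1)" "S b < y" "y < S (b + 1)" "a \<noteq> b"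
  show False
  proof (cases "a < b")
    case True then have "S (a+1) \<le> S b" by (intro S_mono) simp
    then show False using h by simp
  next
    case False then have "S (b+1) \<le> S a" using h(7) by (intro S_mono) simp
    then show False using h by simp
  qed
qed

lemma slev_S: "slev lm (S j)"
  unfolding slev_def using S_max[of j] by (intro exI[of _ "max j (-1)"]) auto

lemma vedge0: "vedge lm 0 = {}"
  by (auto simp: vedge_iff sseq_neg)

lemma X_cases: "p \<in> ladder_X lm \<Longrightarrow> p \<in> ladder_region lm \<or> (\<exists>n. p \<in> hedge lm n) \<or> (\<exists>n. p \<in> vedge lm n)"
  unfolding ladder_X_def by blast

lemma X_I_vedge: "p \<in> vedge lm n \<Longrightarrow> p \<in> ladder_X lm"
  unfolding ladder_X_def using vedge0 by (cases "n = 0") auto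
lemma X_I_hedge: "p \<in> hedge lm n \<Longrightarrow> p \<in> ladder_X lm"
  unfolding ladder_X_def by blast
lemma X_I_region: "p \<in> ladder_region lm \<Longrightarrow> p \<in> ladder_X lm"
  unfolding ladder_X_def by blast

lemma hedge_slev: "p \<in> hedge lm n \<Longrightarrow> slev lm (p$2)"
  using slev_S by (auto simp: hedge_iff)

lemma vedge_strip: "p \<in> vedge lm n \<Longrightarrow> n \<ge> 1 \<and> S (int (n-1) - 1) < p$2 \<and> p$2 < S (int (n - 1))"
  using vedge0 by (cases n) (auto simp: vedge_iff)

lemma nonsing_strip:
  assumes "p \<in> ladder_X lm" "\<not> slev lm (p$2)"
  shows "\<exists>n. S (int n - 1) < p$2 \<and> p$2 < S (int n)"
  using X_cases[OF assms(1)]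
proof (elim disjE exE)
  assume "p \<in> ladder_region lm"
  then show ?thesis using region_cases assms(2) slev_S by metis
next
  fix n assume "p \<in> hedge lm n" then show ?thesis using hedge_slev assms(2) by blast
next
  fix n assume "p \<in> vedge lm n" then show ?thesis using vedge_strip by blast
qed

lemma reps_cases: "z \<in> reps lm p \<Longrightarrow> z = p \<or> glued lm p z"
  unfolding reps_def by blast

lemma self_rep: "p \<in> reps lm p" unfolding reps_def by blast

lemma glued_cases:
  assumes "glued lm p q"
  obtains n where "p \<in> hedge lm n" "q = p + pt 0 (S (int n + 1) - S (int n - 2))"
  | n where "1 \<le> n" "p \<in> vedge lm n" "q = p + pt (S (int n - 3) - S (int n)) 0"
  using assms unfolding glued_def by blast

end

context ladder begin

lemma glued_hedgeI: "p \<in> hedge lm n \<Longrightarrow> glued lm p (p + pt 0 (S (int n + 1) - S (int n - 2)))"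
  unfolding glued_def by blast
lemma glued_vedgeI: "p \<in> vedge lm n \<Longrightarrow> glued lm p (p + pt (S (int n - 3) - S (int n)) 0)"
  unfolding glued_def using vedge_strip by blast

lemma reps_vedge: "p \<in> vedge lm n \<Longrightarrow> p + pt (S (int n - 3) - S (int n)) 0 \<in> reps lm p"
  unfolding reps_def using glued_vedgeI by blast
lemma reps_hedge: "p \<in> hedge lm n \<Longrightarrow> p + pt 0 (S (int n + 1) - S (int n - 2)) \<in> reps lm p"
  unfolding reps_def using glued_hedgeI by blast

lemma vedge_not_slev: "p \<in> vedge lm n \<Longrightarrow> \<not> slev lm (p$2)"
  using vedge_strip strip_not_slev by blast

lemma rep_nonsing: assumes "\<not> slev lm (p$2)" "z \<in> reps lm p" shows "z$2 = p$2"
  using reps_cases[OF assms(2)]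
proof
  assume "glued lm p z"
  then show ?thesis
  proof (cases rule: glued_cases)
    case (1 n) then show ?thesis using hedge_slev assms(1) by blast
  next
    case (2 n) then show ?thesis by simp
  qed
qed simp

lemma rep_sing: assumes "slev lm (p$2)" "z \<in> reps lm p" shows "z$1 = p$1" "slev lm (z$2)"
proof -
  have "z$1 = p$1 \<and> slev lm (z$2)"
  using reps_cases[OF assms(2)]
  proof
    assume "glued lm p z"
    then show ?thesis
    proof (cases rule: glued_cases)
      case (1 n) then show ?thesis using slev_S by (simp add: hedge_iff)
    next
      case (2 n) then show ?thesis using vedge_not_slev assms(1) by blast
    qed
  qed (use assms in simp)
  then show "z$1 = p$1" "slev lm (z$2)" by auto
qed

lemma rep_slev_iff: "z \<in> reps lm p \<Longrightarrow> slev lm (z$2) \<longleftrightarrow> slev lm (p$2)"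
  using rep_nonsing rep_sing by metis

lemma phi_nth1: "phi lm n t s $ 1 = S (int n - 2) + rr (wid lm n) t"
  and phi_nth2: "phi lm n t s $ 2 = S (int n - 1) + s"
  by (simp_all add: phi_def)

lemma phi_self: assumes "S (int n - 2) < x" "x \<le> S (int n + 1)"
  shows "phi lm n (x - S (int n - 2)) (y - S (int n - 1)) = pt x y"
proof -
  have "rr (wid lm n) (x - S (int n - 2)) = x - S (int n - 2)"
    using assms wid_pos by (intro rr_unique[where j=0]) (auto simp: wid_def)
  then show ?thesis by (simp add: phi_def)
qed

lemma phi_zero: "phi lm n 0 s = pt (S (int n + 1)) (S (int n - 1) + s)"
proof -
  have "rr (wid lm n) 0 = wid lm n"
    using wid_pos by (intro rr_unique[where j=1]) auto
  then show ?thesis by (simp add: phi_def wid_def)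
qed

lemma phi_shift: "phi lm n (t + of_int m * wid lm n) s = phi lm n t s"
  by (simp add: phi_def rr_shift wid_pos)

lemma phi_rr: "phi lm n (rr (wid lm n) t + u) s = phi lm n (t + u) s"
  by (simp add: phi_def rr_rr wid_pos)

lemma strip_rep:
  assumes y: "y \<in> ladder_X lm" and z: "z \<in> reps lm y"
    and lev: "S (int n - 1) < z$2" "z$2 < S (int n)"
  shows "S (int n - 2) \<le> z$1 \<and> z$1 \<le> S (int n + 1) \<and> y = phi lm n (z$1 - S (int n - 2)) (z$2 - S (int n - 1))"
proof -
  have ns: "\<not> slev lm (z$2)" using strip_not_slev lev by blast
  show ?thesis
  using reps_cases[OF z]
  proof
    assume zy: "z = y"
    show ?thesis using X_cases[OF y]
    proof (elim disjE exE)
      assume "y \<in> ladder_region lm"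
      then have "(\<exists>n::nat. S (int n - 1) < y$2 \<and> y$2 < S (int n) \<and> S (int n - 2) < y$1 \<and> y$1 < S (int n + 1))
       \<or> (\<exists>n::nat. y$2 = S (int n) \<and> S (int n - 1) < y$1 \<and> y$1 < S (int n + 1))" by (rule region_cases)
      then show ?thesis
      proof (elim disjE exE)
        fix m assume m: "S (int m - 1) < y$2 \<and> y$2 < S (int m) \<and> S (int m - 2) < y$1 \<and> y$1 < S (int m + 1)"
        have "int m - 1 = int n - 1" using strip_unique[of "int m - 1" "int n - 1" "y$2"] m lev zy by simp
        then have "m = n" by simp
        then show ?thesis using m zy phi_self[of n "y$1" "y$2"] pt_of[of y] by auto
      next
        fix m assume "y$2 = S (int m) \<and> S (int m - 1) < y$1 \<and> y$1 < S (int m + 1)"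
        then show ?thesis using ns zy slev_S by auto
      qed
    next
      fix m assume "y \<in> hedge lm m" then show ?thesis using ns zy hedge_slev by blast
    next
      fix m assume m: "y \<in> vedge lm m"
      have m1: "1 \<le> m" using vedge_strip[OF m] by simp
      have "int m - 2 = int n - 1"
        using strip_unique[of "int m - 2" "int n - 1" "y$2"] m1 m lev zy by (simp add: vedge_iff)
      then have "int m = int n + 1" by simp
      moreover have "S (int n - 2) < S (int n + 1)"
        using S_mono[of "int n - 2" "int n - 1"] S_strict[of "int n - 1" "int n + 1"] by simp
      ultimately show ?thesis using m zy phi_self[of n "y$1" "y$2"] pt_of[of y] by (auto simp: vedge_iff)
    qed
  next
    assume "glued lm y z"
    then show ?thesis
    proof (cases rule: glued_cases)
      case (1 m) then show ?thesis using ns slev_S by (simp add: hedge_iff)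
    next
      case (2 m)
      have "int m - 2 = int n - 1"
        using strip_unique[of "int m - 2" "int n - 1" "y$2"] 2 lev by (simp add: vedge_iff)
      then have mn: "int m = int n + 1" by simp
      have z1: "z$1 = S (int n - 2)" using 2 mn by (simp add: vedge_iff)
      have "S (int n - 2) < S (int n + 1)"
        using S_mono[of "int n - 2" "int n - 1"] S_strict[of "int n - 1" "int n + 1"] by simp
      moreover have "y = pt (S (int n + 1)) (z$2)" using 2 mn pt_of[of y] by (simp add: vedge_iff)
      ultimately show ?thesis using z1 phi_zero[of n "z$2 - S (int n - 1)"] by simp
    qed
  qed
qed

lemma hstrip_iff: "p \<in> hstrip lm n \<longleftrightarrow> p \<in> ladder_X lm \<and> S (int n - 1) < p$2 \<and> p$2 < S (int n)"
  unfolding hstrip_def by simp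

lemma hgt_eq: "hgt lm n = S (int n) - S (int n - 1)" by (simp add: hgt_def)

lemma phi_in_strip: assumes "0 < s" "s < hgt lm n" shows "phi lm n t s \<in> hstrip lm n"
proof -
  let ?x = "S (int n - 2) + rr (wid lm n) t"
  have r: "0 < rr (wid lm n) t" "rr (wid lm n) t \<le> wid lm n" using rr_range wid_pos by auto
  have y: "S (int n - 1) < S (int n - 1) + s" "S (int n - 1) + s < S (int n)" using assms hgt_eq by auto
  have "pt ?x (S (int n - 1) + s) \<in> ladder_X lm"
  proof (cases "rr (wid lm n) t < wid lm n")
    case True
    then have "?x < S (int n + 1)" by (simp add: wid_def)
    then show ?thesis using region_strip[OF y] r X_I_region by simp
  next
    case False
    then have "?x = S (int (n + 1))" using r by (simp add: wid_def add.commute)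
    then have "pt ?x (S (int n - 1) + s) \<in> vedge lm (n + 1)" using y by (simp add: vedge_iff)
    then show ?thesis by (rule X_I_vedge)
  qed
  then show ?thesis using y by (simp add: hstrip_iff phi_def)
qed

lemma hstrip_eq: "hstrip lm n = {phi lm n t s | t s. 0 < s \<and> s < hgt lm n}"
proof
  show "hstrip lm n \<subseteq> {phi lm n t s | t s. 0 < s \<and> s < hgt lm n}"
  proof
    fix p assume p: "p \<in> hstrip lm n"
    then have "p \<in> ladder_X lm" "S (int n - 1) < p$2" "p$2 < S (int n)" by (auto simp: hstrip_iff)
    then have "p = phi lm n (p$1 - S (int n - 2)) (p$2 - S (int n - 1))"
      using strip_rep[OF _ self_rep] by blast
    moreover have "0 < p$2 - S (int n - 1)" "p$2 - S (int n - 1) < hgt lm n"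
      using \<open>S (int n - 1) < p$2\<close> \<open>p$2 < S (int n)\<close> hgt_eq by auto
    ultimately show "p \<in> {phi lm n t s | t s. 0 < s \<and> s < hgt lm n}" by blast
  qed
  show "{phi lm n t s | t s. 0 < s \<and> s < hgt lm n} \<subseteq> hstrip lm n"
    using phi_in_strip by blast
qed

lemma phi_reps_edge:
  assumes "0 < s" "s < hgt lm n" "rr (wid lm n) t = wid lm n"
  shows "phi lm n t s - pt (wid lm n) 0 \<in> reps lm (phi lm n t s)"
proof -
  have y: "S (int n - 1) < S (int n - 1) + s" "S (int n - 1) + s < S (int n)" using assms hgt_eq by auto
  have "phi lm n t s \<in> vedge lm (n + 1)" using assms y by (simp add: vedge_iff phi_def wid_def add.commute)
  from reps_vedge[OF this]
  have "phi lm n t s + pt (S (int (n + 1) - 3) - S (int (n + 1))) 0 \<in> reps lm (phi lm n t s)" .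
  moreover have "phi lm n t s + pt (S (int (n + 1) - 3) - S (int (n + 1))) 0 = phi lm n t s - pt (wid lm n) 0"
    by (rule vec2_eqI) (simp_all add: wid_def add.commute)
  ultimately show ?thesis by simp
qed

lemma phi_local:
  assumes "0 < s" "s < hgt lm n"
  shows "\<exists>e>0. \<forall>t' s'. 0 < s' \<and> s' < hgt lm n \<and> \<bar>t' - t\<bar> < e \<longrightarrow>
     (\<exists>r\<in>reps lm (phi lm n t s). \<exists>r'\<in>reps lm (phi lm n t' s'). r' - r = pt (t' - t) (s' - s))"
proof -
  let ?w = "wid lm n" let ?a = "rr ?w t"
  have w: "0 < ?w" by (rule wid_pos)
  have a: "0 < ?a" "?a \<le> ?w" using rr_range[OF w] by auto
  obtain j where j: "?a = t + of_int j * ?w" using rr_cong by blast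
  show ?thesis
  proof (cases "?a < ?w")
    case True
    show ?thesis
    proof (intro exI[of _ "min ?a (?w - ?a)"] conjI allI impI)
      show "0 < min ?a (?w - ?a)" using a True by simp
      fix t' s' assume h: "0 < s' \<and> s' < hgt lm n \<and> \<bar>t' - t\<bar> < min ?a (?w - ?a)"
      have "rr ?w t' = ?a + (t' - t)"
        using h w by (intro rr_unique[where j=j]) (auto simp: j)
      then have "phi lm n t' s' - phi lm n t s = pt (t' - t) (s' - s)" by (simp add: phi_def)
      then show "\<exists>r\<in>reps lm (phi lm n t s). \<exists>r'\<in>reps lm (phi lm n t' s'). r' - r = pt (t' - t) (s' - s)"
        using self_rep by blast
    qed
  next
    case False
    then have aw: "?a = ?w" using a by simp
    show ?thesis
    proof (intro exI[of _ ?w] conjI allI impI)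
      show "0 < ?w" by (rule w)
      fix t' s' assume h: "0 < s' \<and> s' < hgt lm n \<and> \<bar>t' - t\<bar> < ?w"
      show "\<exists>r\<in>reps lm (phi lm n t s). \<exists>r'\<in>reps lm (phi lm n t' s'). r' - r = pt (t' - t) (s' - s)"
      proof (cases "t' \<le> t")
        case True
        have "rr ?w t' = ?a + (t' - t)"
          using h w True aw by (intro rr_unique[where j=j]) (auto simp: j)
        then have "phi lm n t' s' - phi lm n t s = pt (t' - t) (s' - s)" by (simp add: phi_def)
        then show ?thesis using self_rep by blast
      next
        case False
        have "rr ?w t' = t' - t"
          using h w False aw by (intro rr_unique[where j="j - 1"]) (auto simp: j algebra_simps)
        then have "phi lm n t' s' - (phi lm n t s - pt ?w 0) = pt (t' - t) (s' - s)"
          using aw by (simp add: phi_def)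
        then show ?thesis using self_rep phi_reps_edge[OF assms aw] by blast
      qed
    qed
  qed
qed

lemma phi_inj:
  assumes "0 < s" "s < hgt lm n" "0 < s'" "s' < hgt lm n" "phi lm n t s = phi lm n t' s'"
  shows "s = s' \<and> (\<exists>j::int. t' = t + real_of_int j * wid lm n)"
proof -
  have "rr (wid lm n) t = rr (wid lm n) t'" "s = s'"
    using assms(5) arg_cong[OF assms(5), of "\<lambda>p. p$1"] arg_cong[OF assms(5), of "\<lambda>p. p$2"]
    by (simp_all add: phi_def pt_eq_iff)
  moreover obtain j j' where "rr (wid lm n) t = t + of_int j * wid lm n" "rr (wid lm n) t' = t' + of_int j' * wid lm n"
    using rr_cong by metis
  ultimately have "t' = t + of_int (j - j') * wid lm n" by (simp add: algebra_simps)
  then show ?thesis using \<open>s = s'\<close> by blast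
qed

lemma strip_hcyl: "hcyl_param lm (phi lm n) (wid lm n) (hgt lm n) (hstrip lm n)"
proof -
  have A: "\<forall>t s. 0 < s \<and> s < hgt lm n \<longrightarrow> phi lm n (t + wid lm n) s = phi lm n t s"
    using phi_shift[of n _ 1] by simp
  have B: "\<forall>t s t' s'. 0 < s \<and> s < hgt lm n \<and> 0 < s' \<and> s' < hgt lm n \<and> phi lm n t s = phi lm n t' s' \<longrightarrow>
         s = s' \<and> (\<exists>j::int. t' = t + real_of_int j * wid lm n)" using phi_inj by blast
  have C: "\<forall>t s. 0 < s \<and> s < hgt lm n \<longrightarrow>
        (\<exists>e>0. \<forall>t' s'. 0 < s' \<and> s' < hgt lm n \<and> norm (pt (t' - t) (s' - s)) < e \<longrightarrow>
           (\<exists>r\<in>reps lm (phi lm n t s). \<exists>r'\<in>reps lm (phi lm n t' s'). r' - r = pt (t' - t) (s' - s)))"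
  proof (intro allI impI)
    fix t s assume h: "0 < s \<and> s < hgt lm n"
    then obtain e where e: "e > 0" "\<forall>t' s'. 0 < s' \<and> s' < hgt lm n \<and> \<bar>t' - t\<bar> < e \<longrightarrow>
       (\<exists>r\<in>reps lm (phi lm n t s). \<exists>r'\<in>reps lm (phi lm n t' s'). r' - r = pt (t' - t) (s' - s))"
      using phi_local by blast
    show "\<exists>e>0. \<forall>t' s'. 0 < s' \<and> s' < hgt lm n \<and> norm (pt (t' - t) (s' - s)) < e \<longrightarrow>
           (\<exists>r\<in>reps lm (phi lm n t s). \<exists>r'\<in>reps lm (phi lm n t' s'). r' - r = pt (t' - t) (s' - s))"
      using e norm_pt_ge1 le_less_trans by blast
  qed
  have D: "hstrip lm n \<subseteq> ladder_X lm" by (auto simp: hstrip_iff)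
  show ?thesis unfolding hcyl_param_def
    apply (intro conjI)
    using A B C D wid_pos hgt_pos hstrip_eq apply (simp_all only:)
    done
qed

end


lemma loc_const_real:
  fixes f :: "real \<Rightarrow> 'b"
  assumes "connected A" "a \<in> A" "b \<in> A"
    and loc: "\<forall>x\<in>A. \<exists>e>0. \<forall>y\<in>A. \<bar>y - x\<bar> < e \<longrightarrow> f y = f x"
  shows "f a = f b"
proof (rule connected_local_const[OF assms(1-3)])
  show "\<forall>a\<in>A. \<forall>\<^sub>F b in at a within A. f a = f b"
  proof
    fix x assume "x \<in> A"
    then obtain e where e: "e > 0" "\<forall>y\<in>A. \<bar>y - x\<bar> < e \<longrightarrow> f y = f x" using loc by blast
    show "\<forall>\<^sub>F b in at x within A. f x = f b"
      unfolding eventually_at using e by (intro exI[of _ e]) (auto simp: dist_real_def)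
  qed
qed

context ladder begin

lemma cyl_in_strip:
  assumes cyl: "hcyl_param lm \<phi> w h C"
  shows "\<exists>n. C \<subseteq> hstrip lm n"
proof -
  note H = cyl[unfolded hcyl_param_def]
  have w: "0 < w" using H by (elim conjE)
  have h: "0 < h" using H by (elim conjE)
  have Ceq: "C = {\<phi> t s | t s. 0 < s \<and> s < h}" using H by (elim conjE)
  have CX: "C \<subseteq> ladder_X lm" using H by (elim conjE)
  have per0: "\<forall>t s. 0 < s \<and> s < h \<longrightarrow> \<phi> (t + w) s = \<phi> t s" using H by (elim conjE)
  have loc00: "\<forall>t s. 0 < s \<and> s < h \<longrightarrow>
        (\<exists>e>0. \<forall>t' s'. 0 < s' \<and> s' < h \<and> norm (pt (t' - t) (s' - s)) < e \<longrightarrow>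
           (\<exists>r\<in>reps lm (\<phi> t s). \<exists>r'\<in>reps lm (\<phi> t' s'). r' - r = pt (t' - t) (s' - s)))"
    using H by (elim conjE)
  have per: "\<And>t s. 0 < s \<Longrightarrow> s < h \<Longrightarrow> \<phi> (t + w) s = \<phi> t s" using per0 by blast
  have loc0: "\<And>t s. 0 < s \<Longrightarrow> s < h \<Longrightarrow>
        (\<exists>e>0. \<forall>t' s'. 0 < s' \<and> s' < h \<and> norm (pt (t' - t) (s' - s)) < e \<longrightarrow>
           (\<exists>r\<in>reps lm (\<phi> t s). \<exists>r'\<in>reps lm (\<phi> t' s'). r' - r = pt (t' - t) (s' - s)))"
    using loc00 by blast
  have inX: "\<And>t s. 0 < s \<Longrightarrow> s < h \<Longrightarrow> \<phi> t s \<in> ladder_X lm" using Ceq CX by blast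
  have loc: "\<exists>e>0. \<forall>t' s'. 0 < s' \<and> s' < h \<and> \<bar>t' - t\<bar> < e \<and> \<bar>s' - s\<bar> < e \<longrightarrow>
           (\<exists>r\<in>reps lm (\<phi> t s). \<exists>r'\<in>reps lm (\<phi> t' s'). r' - r = pt (t' - t) (s' - s))"
    if st: "0 < s" "s < h" for t s
  proof -
    obtain e where e: "e > 0" "\<forall>t' s'. 0 < s' \<and> s' < h \<and> norm (pt (t' - t) (s' - s)) < e \<longrightarrow>
           (\<exists>r\<in>reps lm (\<phi> t s). \<exists>r'\<in>reps lm (\<phi> t' s'). r' - r = pt (t' - t) (s' - s))"
      using loc0[OF st] by blast
    show ?thesis
    proof (intro exI[of _ "e/2"] conjI allI impI)
      show "0 < e/2" using e by simp
      fix t' s' assume a: "0 < s' \<and> s' < h \<and> \<bar>t' - t\<bar> < e/2 \<and> \<bar>s' - s\<bar> < e/2"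
      have "norm (pt (t' - t) (s' - s)) < e" using norm_le_sum[of "pt (t' - t) (s' - s)"] a by simp
      then show "\<exists>r\<in>reps lm (\<phi> t s). \<exists>r'\<in>reps lm (\<phi> t' s'). r' - r = pt (t' - t) (s' - s)"
        using e a by blast
    qed
  qed
  have nonsing: "\<not> slev lm ((\<phi> t s)$2)" if st: "0 < s" "s < h" for t s
  proof
    assume sing0: "slev lm ((\<phi> t s)$2)"
    define F where "F t' = slev lm ((\<phi> t' s)$2)" for t'
    have Fc: "F t' = F t" for t'
    proof (rule loc_const_real[where A=UNIV and a=t' and b=t and f=F])
      show "\<forall>x\<in>UNIV. \<exists>e>0. \<forall>y\<in>UNIV. \<bar>y - x\<bar> < e \<longrightarrow> F y = F x"
      proof
        fix x
        obtain e where e: "e > 0" "\<forall>t' s'. 0 < s' \<and> s' < h \<and> \<bar>t' - x\<bar> < e \<and> \<bar>s' - s\<bar> < e \<longrightarrow>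
           (\<exists>r\<in>reps lm (\<phi> x s). \<exists>r'\<in>reps lm (\<phi> t' s'). r' - r = pt (t' - x) (s' - s))"
          using loc[OF st] by blast
        have "F y = F x" if "\<bar>y - x\<bar> < e" for y
        proof -
          have "\<exists>r\<in>reps lm (\<phi> x s). \<exists>r'\<in>reps lm (\<phi> y s). r' - r = pt (y - x) (s - s)"
            using e(2)[rule_format, where t'=y and s'=s] e(1) that \<open>0 < s\<close> \<open>s < h\<close> by simp
          then obtain r r' where r: "r \<in> reps lm (\<phi> x s)" "r' \<in> reps lm (\<phi> y s)" "r' - r = pt (y - x) 0"
            by auto
          have "r'$2 = r$2" using arg_cong[OF r(3), of "\<lambda>p. p$2"] by simp
          then show ?thesis unfolding F_def using rep_slev_iff r by metis
        qed
        then show "\<exists>e>0. \<forall>y\<in>UNIV. \<bar>y - x\<bar> < e \<longrightarrow> F y = F x" using e by blast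
      qed
    qed auto
    then have allsing: "slev lm ((\<phi> t' s)$2)" for t' using sing0 F_def by simp
    define G where "G t' = (\<phi> t' s)$1 - t'" for t'
    have Gc: "G (t + w) = G t"
    proof (rule loc_const_real[where A=UNIV and a="t + w" and b=t and f=G])
      show "\<forall>x\<in>UNIV. \<exists>e>0. \<forall>y\<in>UNIV. \<bar>y - x\<bar> < e \<longrightarrow> G y = G x"
      proof
        fix x
        obtain e where e: "e > 0" "\<forall>t' s'. 0 < s' \<and> s' < h \<and> \<bar>t' - x\<bar> < e \<and> \<bar>s' - s\<bar> < e \<longrightarrow>
           (\<exists>r\<in>reps lm (\<phi> x s). \<exists>r'\<in>reps lm (\<phi> t' s'). r' - r = pt (t' - x) (s' - s))"
          using loc[OF st] by blast
        have "G y = G x" if "\<bar>y - x\<bar> < e" for y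
        proof -
          have "\<exists>r\<in>reps lm (\<phi> x s). \<exists>r'\<in>reps lm (\<phi> y s). r' - r = pt (y - x) (s - s)"
            using e(2)[rule_format, where t'=y and s'=s] e(1) that \<open>0 < s\<close> \<open>s < h\<close> by simp
          then obtain r r' where r: "r \<in> reps lm (\<phi> x s)" "r' \<in> reps lm (\<phi> y s)" "r' - r = pt (y - x) 0"
            by auto
          have "r'$1 - r$1 = y - x" using arg_cong[OF r(3), of "\<lambda>p. p$1"] by simp
          moreover have "r$1 = (\<phi> x s)$1" "r'$1 = (\<phi> y s)$1" using rep_sing(1) allsing r by blast+
          ultimately show ?thesis unfolding G_def by simp
        qed
        then show "\<exists>e>0. \<forall>y\<in>UNIV. \<bar>y - x\<bar> < e \<longrightarrow> G y = G x" using e by blast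
      qed
    qed auto
    then show False using per[OF that, of t] w unfolding G_def by simp
  qed
  define Y where "Y t s = (\<phi> t s)$2" for t s
  have Yloc: "Y t' s' = Y t s + (s' - s)" if st: "0 < s" "s < h" "0 < s'" "s' < h" "\<bar>t' - t\<bar> < e" "\<bar>s' - s\<bar> < e"
    and e: "\<forall>t' s'. 0 < s' \<and> s' < h \<and> \<bar>t' - t\<bar> < e \<and> \<bar>s' - s\<bar> < e \<longrightarrow>
           (\<exists>r\<in>reps lm (\<phi> t s). \<exists>r'\<in>reps lm (\<phi> t' s'). r' - r = pt (t' - t) (s' - s))" for t s t' s' e
  proof -
    obtain r r' where r: "r \<in> reps lm (\<phi> t s)" "r' \<in> reps lm (\<phi> t' s')" "r' - r = pt (t' - t) (s' - s)"
      using e st by blast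
    have "r'$2 - r$2 = s' - s" using arg_cong[OF r(3), of "\<lambda>p. p$2"] by simp
    moreover have "r$2 = Y t s" "r'$2 = Y t' s'" unfolding Y_def using rep_nonsing nonsing st r by blast+
    ultimately show ?thesis by simp
  qed
  have Yt: "Y t s = Y 0 s" if st: "0 < s" "s < h" for t s
  proof (rule loc_const_real[where A=UNIV and f="\<lambda>t. Y t s"])
    show "\<forall>x\<in>UNIV. \<exists>e>0. \<forall>y\<in>UNIV. \<bar>y - x\<bar> < e \<longrightarrow> Y y s = Y x s"
    proof
      fix x
      obtain e where e: "e > 0" "\<forall>t' s'. 0 < s' \<and> s' < h \<and> \<bar>t' - x\<bar> < e \<and> \<bar>s' - s\<bar> < e \<longrightarrow>
           (\<exists>r\<in>reps lm (\<phi> x s). \<exists>r'\<in>reps lm (\<phi> t' s'). r' - r = pt (t' - x) (s' - s))"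
        using loc[OF st] by blast
      show "\<exists>e>0. \<forall>y\<in>UNIV. \<bar>y - x\<bar> < e \<longrightarrow> Y y s = Y x s"
      proof (intro exI[of _ e] conjI ballI impI)
        fix y assume "\<bar>y - x\<bar> < e"
        then show "Y y s = Y x s" using Yloc[where t=x and s=s and t'=y and s'=s and e=e] that e by simp
      qed (use e in simp)
    qed
  qed auto
  have Ys: "Y 0 s - s = Y 0 (h/2) - h/2" if "0 < s" "s < h" for s
  proof (rule loc_const_real[where A="{0<..<h}" and f="\<lambda>s. Y 0 s - s"])
    show "\<forall>x\<in>{0<..<h}. \<exists>e>0. \<forall>y\<in>{0<..<h}. \<bar>y - x\<bar> < e \<longrightarrow> Y 0 y - y = Y 0 x - x"
    proof
      fix x assume x: "x \<in> {0<..<h}"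
      obtain e where e: "e > 0" "\<forall>t' s'. 0 < s' \<and> s' < h \<and> \<bar>t' - 0\<bar> < e \<and> \<bar>s' - x\<bar> < e \<longrightarrow>
           (\<exists>r\<in>reps lm (\<phi> 0 x). \<exists>r'\<in>reps lm (\<phi> t' s'). r' - r = pt (t' - 0) (s' - x))"
        using loc[of x 0] x by auto
      show "\<exists>e>0. \<forall>y\<in>{0<..<h}. \<bar>y - x\<bar> < e \<longrightarrow> Y 0 y - y = Y 0 x - x"
      proof (intro exI[of _ e] conjI ballI impI)
        fix y assume "y \<in> {0<..<h}" "\<bar>y - x\<bar> < e"
        then show "Y 0 y - y = Y 0 x - x" using Yloc[where t=0 and s=x and t'=0 and s'=y and e=e] x e by simp
      qed (use e in simp)
    qed
  next
    show "s \<in> {0<..<h}" using that by simp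
  next
    show "h/2 \<in> {0<..<h}" using h by simp
  qed simp
  define c where "c = Y 0 (h/2) - h/2"
  have Yc: "Y t s = c + s" if "0 < s" "s < h" for t s
    using Yt[OF that, of t] Ys[OF that] c_def by linarith
  have h2: "0 < h/2" "h/2 < h" using h by auto
  obtain n where n: "S (int n - 1) < (\<phi> 0 (h/2))$2" "(\<phi> 0 (h/2))$2 < S (int n)"
    using nonsing_strip[OF inX[OF h2] nonsing[OF h2]] by blast
  have "(\<phi> 0 (h/2))$2 = c + h/2" using Yc[OF h2, of 0] unfolding Y_def .
  with n have n: "S (int n - 1) < c + h/2" "c + h/2 < S (int n)" by auto
  have "\<phi> t s \<in> hstrip lm n" if "0 < s" "s < h" for t s
  proof -
    have "c + s < S (int n)"
    proof (rule ccontr)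
      assume "\<not> ?thesis"
      then have s1: "0 < S (int n) - c" "S (int n) - c < h" using n that by auto
      then have "Y 0 (S (int n) - c) = S (int n)" using Yc by simp
      then show False using nonsing[OF s1] slev_S unfolding Y_def by metis
    qed
    moreover have "S (int n - 1) < c + s"
    proof (rule ccontr)
      assume "\<not> ?thesis"
      then have s1: "0 < S (int n - 1) - c" "S (int n - 1) - c < h" using n that by auto
      then have "Y 0 (S (int n - 1) - c) = S (int n - 1)" using Yc by simp
      then show False using nonsing[OF s1] slev_S unfolding Y_def by metis
    qed
    ultimately show ?thesis using inX[OF that] Yc[OF that, of t] unfolding hstrip_iff Y_def by simp
  qed
  then show ?thesis using Ceq by blast
qed

lemma hstrip_disj: "n \<noteq> m \<Longrightarrow> hstrip lm n \<inter> hstrip lm m = {}"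
proof (rule ccontr)
  assume "n \<noteq> m" "hstrip lm n \<inter> hstrip lm m \<noteq> {}"
  then obtain p where "p \<in> hstrip lm n" "p \<in> hstrip lm m" by blast
  then have "int n - 1 = int m - 1"
    by (intro strip_unique[of _ _ "p$2"]) (auto simp: hstrip_iff)
  then show False using \<open>n \<noteq> m\<close> by simp
qed

lemma hstrip_ne: "phi lm n 0 (hgt lm n / 2) \<in> hstrip lm n"
  using hgt_pos[of n] by (intro phi_in_strip) auto

lemma is_hcyl_strip: "is_hcyl lm (hstrip lm n)"
  unfolding is_hcyl_def using strip_hcyl by blast

lemma max_hcyl_iff: "max_hcyl lm C \<longleftrightarrow> (\<exists>n. C = hstrip lm n)"
proof
  assume m: "max_hcyl lm C"
  then obtain \<phi> w h where "hcyl_param lm \<phi> w h C" unfolding max_hcyl_def is_hcyl_def by blast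
  then obtain n where "C \<subseteq> hstrip lm n" using cyl_in_strip by blast
  then show "\<exists>n. C = hstrip lm n" using m is_hcyl_strip unfolding max_hcyl_def by metis
next
  assume "\<exists>n. C = hstrip lm n"
  then obtain n where C: "C = hstrip lm n" by blast
  have "C' = C" if h1: "is_hcyl lm C'" and h2: "C \<subseteq> C'" for C'
  proof -
    obtain \<phi> w h where "hcyl_param lm \<phi> w h C'" using h1 unfolding is_hcyl_def by blast
    then obtain m where m: "C' \<subseteq> hstrip lm m" using cyl_in_strip by blast
    have "n = m" using hstrip_disj[of n m] hstrip_ne[of n] m h2 C by blast
    then show ?thesis using m h2 C by blast
  qed
  then show "max_hcyl lm C" unfolding max_hcyl_def using C is_hcyl_strip by blast
qed

end


lemma finite_min_eps:
  assumes "finite R" "\<forall>r\<in>R. \<exists>e>0. P r (e::real)"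
    and mono: "\<And>r e e'. P r e \<Longrightarrow> 0 < e' \<Longrightarrow> e' \<le> e \<Longrightarrow> P r e'"
  shows "\<exists>e>0. \<forall>r\<in>R. P r e"
  using assms(1,2)
proof (induction R rule: finite_induct)
  case empty then show ?case by (auto intro: exI[of _ 1])
next
  case (insert x F)
  then obtain e1 where e1: "e1 > 0" "\<forall>r\<in>F. P r e1" by auto
  obtain e2 where e2: "e2 > 0" "P x e2" using insert.prems by auto
  show ?case
    using e1 e2 mono[of _ e1 "min e1 e2"] mono[of x e2 "min e1 e2"]
    by (intro exI[of _ "min e1 e2"]) auto
qed

lemma openin_ladder: "openin (ladder_top lm) = ladder_open lm"
  unfolding ladder_top_def by (rule topology_inverse'[OF istopology_ladder_open])

lemma topspace_ladder: "topspace (ladder_top lm) = ladder_X lm"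
proof -
  have "ladder_open lm (ladder_X lm)" unfolding ladder_open_def using zero_less_one by blast
  moreover have "\<And>U. ladder_open lm U \<Longrightarrow> U \<subseteq> ladder_X lm" unfolding ladder_open_def by blast
  ultimately show ?thesis unfolding topspace_def openin_ladder by blast
qed

context ladder begin

lemma glued_unique: assumes "glued lm p q" "glued lm p q'" shows "q = q'"
  using assms(1)
proof (cases rule: glued_cases)
  case (1 n)
  show ?thesis using assms(2)
  proof (cases rule: glued_cases)
    case (1 n')
    have "int n - 1 = int n' - 1"
      using strip_unique[of "int n - 1" "int n' - 1" "p$1"] \<open>p \<in> hedge lm n\<close> 1
      by (simp add: hedge_iff)
    then show ?thesis using 1 \<open>q = _\<close> by simp
  next
    case (2 n') then show ?thesis using \<open>p \<in> hedge lm n\<close> hedge_slev vedge_not_slev by blast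
  qed
next
  case (2 n)
  show ?thesis using assms(2)
  proof (cases rule: glued_cases)
    case (1 n') then show ?thesis using \<open>p \<in> vedge lm n\<close> hedge_slev vedge_not_slev by blast
  next
    case (2 n')
    have "S (int n) = S (int n')" using 2 \<open>p \<in> vedge lm n\<close> by (simp add: vedge_iff)
    then have "n = n'" using S_inj[of "int n" "int n'"] by simp
    then show ?thesis using 2 \<open>q = _\<close> by simp
  qed
qed

lemma reps_finite: "finite (reps lm p)"
proof -
  have "finite {q. glued lm p q}"
  proof (cases "{q. glued lm p q} = {}")
    case False
    then obtain q where q: "glued lm p q" by blast
    then have "{q. glued lm p q} \<subseteq> {q}" using glued_unique by blast
    then show ?thesis using finite_subset by blast
  qed simp
  then show ?thesis unfolding reps_def by simp
qed

lemma locally_affine_cont: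
  assumes la: "locally_affine lm A f" and fX: "\<forall>x\<in>ladder_X lm. f x \<in> ladder_X lm"
    and B: "\<forall>v. norm (A *v v) \<le> B * norm v" "0 < B"
  shows "continuous_map (ladder_top lm) (ladder_top lm) f"
  unfolding continuous_map_def topspace_ladder openin_ladder
proof (intro conjI allI impI)
  show "f \<in> ladder_X lm \<rightarrow> ladder_X lm" using fX by blast
  fix U assume U: "ladder_open lm U"
  show "ladder_open lm {x \<in> ladder_X lm. f x \<in> U}"
    unfolding ladder_open_def
  proof (intro conjI ballI)
    show "{x \<in> ladder_X lm. f x \<in> U} \<subseteq> ladder_X lm" by blast
    fix x d assume x: "x \<in> {x \<in> ladder_X lm. f x \<in> U}" and d: "d \<in> reps lm x"
    obtain e1 where e1: "e1 > 0" "\<forall>y\<in>ladder_X lm. \<forall>d'\<in>reps lm y. norm (d' - d) < e1 \<longrightarrow>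
        (\<exists>r\<in>reps lm (f x). \<exists>r'\<in>reps lm (f y). r' - r = A *v (d' - d))"
      using la x d unfolding locally_affine_def by blast
    have fxU: "f x \<in> U" using x by blast
    have "\<forall>r\<in>reps lm (f x). \<exists>e>0. \<forall>y\<in>ladder_X lm. \<forall>d'\<in>reps lm y. norm (d' - r) < e \<longrightarrow> y \<in> U"
      using U fxU unfolding ladder_open_def by (elim conjE) (rule bspec)
    moreover have mono: "\<And>r e e'. (\<forall>y\<in>ladder_X lm. \<forall>d'\<in>reps lm y. norm (d' - r) < e \<longrightarrow> y \<in> U) \<Longrightarrow> 0 < e' \<Longrightarrow> e' \<le> e \<Longrightarrow>
        (\<forall>y\<in>ladder_X lm. \<forall>d'\<in>reps lm y. norm (d' - r) < e' \<longrightarrow> y \<in> U)"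
      by (meson less_le_trans)
    ultimately obtain e2 where e2: "e2 > 0" "\<forall>r\<in>reps lm (f x). \<forall>y\<in>ladder_X lm. \<forall>d'\<in>reps lm y. norm (d' - r) < e2 \<longrightarrow> y \<in> U"
      using finite_min_eps[OF reps_finite, where P="\<lambda>r e. \<forall>y\<in>ladder_X lm. \<forall>d'\<in>reps lm y. norm (d' - r) < e \<longrightarrow> y \<in> U"]
      by blast
    show "\<exists>e>0. \<forall>y\<in>ladder_X lm. \<forall>d'\<in>reps lm y. norm (d' - d) < e \<longrightarrow> y \<in> {x \<in> ladder_X lm. f x \<in> U}"
    proof (intro exI[of _ "min e1 (e2 / B)"] conjI ballI impI)
      show "0 < min e1 (e2 / B)" using e1 e2 B by simp
      fix y d' assume y: "y \<in> ladder_X lm" and d': "d' \<in> reps lm y" and n: "norm (d' - d) < min e1 (e2 / B)"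
      have "norm (d' - d) < e1" using n by simp
      then obtain r r' where r: "r \<in> reps lm (f x)" "r' \<in> reps lm (f y)" "r' - r = A *v (d' - d)"
        using e1(2) y d' by blast
      have "norm (r' - r) \<le> B * norm (d' - d)" using r(3) B by simp
      also have "\<dots> < B * (e2 / B)" using n B by (intro mult_strict_left_mono) auto
      finally have "norm (r' - r) < e2" using B by simp
      moreover have "f y \<in> ladder_X lm" using fX y by blast
      ultimately have "f y \<in> U" using e2(2) r by blast
      then show "y \<in> {x \<in> ladder_X lm. f x \<in> U}" using y by blast
    qed
  qed
qed

lemma sing_above:
  assumes "x \<in> ladder_X lm" "slev lm (x$2)"
  shows "\<exists>k::nat. x$2 = S (int k - 1) \<and> S (int k - 2) < x$1 \<and> x$1 < S (int k + 1)"
  using X_cases[OF assms(1)]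
proof (elim disjE exE)
  assume "x \<in> ladder_region lm"
  then have "(\<exists>n::nat. S (int n - 1) < x$2 \<and> x$2 < S (int n) \<and> S (int n - 2) < x$1 \<and> x$1 < S (int n + 1))
       \<or> (\<exists>n::nat. x$2 = S (int n) \<and> S (int n - 1) < x$1 \<and> x$1 < S (int n + 1))" by (rule region_cases)
  then show ?thesis
  proof (elim disjE exE)
    fix n assume "S (int n - 1) < x$2 \<and> x$2 < S (int n) \<and> S (int n - 2) < x$1 \<and> x$1 < S (int n + 1)"
    then show ?thesis using strip_not_slev assms(2) by blast
  next
    fix n assume n: "x$2 = S (int n) \<and> S (int n - 1) < x$1 \<and> x$1 < S (int n + 1)"
    have "S (int n + 1) \<le> S (int n + 2)" by (rule S_mono) simp
    then show ?thesis using n by (intro exI[of _ "n+1"]) (auto simp: add.commute)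
  qed
next
  fix m assume m: "x \<in> hedge lm m"
  show ?thesis
  proof (cases m)
    case 0
    have "S 0 \<le> S 1" by (rule S_mono) simp
    then show ?thesis using m 0 by (intro exI[of _ 0]) (auto simp: hedge_iff sseq_neg)
  next
    case (Suc k)
    have "S (int k - 2) \<le> S (int k)" by (rule S_mono) simp
    then show ?thesis using m Suc by (intro exI[of _ k]) (auto simp: hedge_iff add.commute)
  qed
next
  fix m assume "x \<in> vedge lm m" then show ?thesis using vedge_not_slev assms(2) by blast
qed

lemma closure_union: "\<Union>{ladder_top lm closure_of C | C. max_hcyl lm C} = ladder_X lm"
proof
  show "\<Union>{ladder_top lm closure_of C | C. max_hcyl lm C} \<subseteq> ladder_X lm"
  proof (rule Union_least)
    fix A assume "A \<in> {ladder_top lm closure_of C | C. max_hcyl lm C}"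
    then obtain C where "A = ladder_top lm closure_of C" by blast
    then show "A \<subseteq> ladder_X lm" using closure_of_subset_topspace[of "ladder_top lm" C] topspace_ladder by simp
  qed
  show "ladder_X lm \<subseteq> \<Union>{ladder_top lm closure_of C | C. max_hcyl lm C}"
  proof
    fix x assume x: "x \<in> ladder_X lm"
    have "\<exists>k. x \<in> ladder_top lm closure_of (hstrip lm k)"
    proof (cases "slev lm (x$2)")
      case False
      then obtain n where "S (int n - 1) < x$2" "x$2 < S (int n)" using nonsing_strip x by blast
      then have "x \<in> hstrip lm n" using x by (simp add: hstrip_iff)
      moreover have "hstrip lm n \<subseteq> topspace (ladder_top lm)" by (auto simp: topspace_ladder hstrip_iff)
      ultimately show ?thesis using closure_of_subset by blast
    next
      case True
      then obtain k where k: "x$2 = S (int k - 1)" "S (int k - 2) < x$1" "x$1 < S (int k + 1)"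
        using sing_above x by blast
      have "x \<in> ladder_top lm closure_of (hstrip lm k)"
        unfolding closure_of_def topspace_ladder openin_ladder
      proof (intro CollectI conjI allI impI)
        show "x \<in> ladder_X lm" by (rule x)
        fix T assume T: "x \<in> T \<and> ladder_open lm T"
        have "\<forall>x\<in>T. \<forall>d\<in>reps lm x. \<exists>e>0. \<forall>y\<in>ladder_X lm. \<forall>d'\<in>reps lm y. norm (d' - d) < e \<longrightarrow> y \<in> T"
          using T by (simp add: ladder_open_def)
        then have "\<exists>e>0. \<forall>y\<in>ladder_X lm. \<forall>d'\<in>reps lm y. norm (d' - x) < e \<longrightarrow> y \<in> T"
          using T self_rep by blast
        then obtain e where e: "e > 0" "\<forall>y\<in>ladder_X lm. \<forall>d'\<in>reps lm y. norm (d' - x) < e \<longrightarrow> y \<in> T"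
          by blast
        define \<delta> where "\<delta> = min (e/2) (hgt lm k / 2)"
        have \<delta>: "0 < \<delta>" "\<delta> < e" "\<delta> < hgt lm k" using e hgt_pos[of k] by (auto simp: \<delta>_def)
        let ?y = "pt (x$1) (x$2 + \<delta>)"
        have "?y \<in> ladder_region lm" using k \<delta> by (intro region_strip) (auto simp: hgt_eq)
        then have yX: "?y \<in> ladder_X lm" by (rule X_I_region)
        then have yS: "?y \<in> hstrip lm k" using k \<delta> by (auto simp: hstrip_iff hgt_eq)
        have "norm (?y - x) = \<delta>" using norm_pt_0[of \<delta>] \<delta> by (simp add: diff_pt)
        then have "norm (?y - x) < e" using \<delta> by simp
        then have "?y \<in> T" using e(2) yX self_rep by blast
        then show "\<exists>y\<in>hstrip lm k. y \<in> T" using yS by blast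
      qed
      then show ?thesis by blast
    qed
    then obtain k where k: "x \<in> ladder_top lm closure_of (hstrip lm k)" by blast
    have "max_hcyl lm (hstrip lm k)" using max_hcyl_iff by blast
    then show "x \<in> \<Union>{ladder_top lm closure_of C | C. max_hcyl lm C}"
      using k by blast
  qed
qed

end


definition twist :: "real \<Rightarrow> real \<Rightarrow> real^2 \<Rightarrow> real^2" where
  "twist lm c p = (if \<exists>n. p \<in> hstrip lm n then
     (let n = (SOME n. p \<in> hstrip lm n) in
       phi lm n (p$1 - sseq lm (int n - 2) + c * (p$2 - sseq lm (int n - 1))) (p$2 - sseq lm (int n - 1)))
     else p)"

context ladder begin

lemma twist_strip: assumes "p \<in> hstrip lm n"
  shows "twist lm c p = phi lm n (p$1 - S (int n - 2) + c * (p$2 - S (int n - 1))) (p$2 - S (int n - 1))"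
proof -
  have "(SOME n. p \<in> hstrip lm n) = n"
  proof (rule some_equality)
    show "p \<in> hstrip lm n" by (rule assms)
    fix m assume "p \<in> hstrip lm m" then show "m = n" using assms hstrip_disj by blast
  qed
  then show ?thesis using assms unfolding twist_def by auto
qed

lemma twist_other: "(\<forall>n. p \<notin> hstrip lm n) \<Longrightarrow> twist lm c p = p"
  unfolding twist_def by auto

lemma twist_phi: assumes "0 < s" "s < hgt lm n"
  shows "twist lm c (phi lm n t s) = phi lm n (t + c * s) s"
proof -
  have "phi lm n t s \<in> hstrip lm n" using phi_in_strip assms by blast
  then have "twist lm c (phi lm n t s) = phi lm n (rr (wid lm n) t + c * s) s"
    by (simp add: twist_strip phi_nth1 phi_nth2)
  then show ?thesis by (simp add: phi_rr)
qed

lemma twist_X: assumes "p \<in> ladder_X lm" shows "twist lm c p \<in> ladder_X lm"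
proof (cases "\<exists>n. p \<in> hstrip lm n")
  case True
  then obtain n where n: "p \<in> hstrip lm n" by blast
  then obtain t s where p: "p = phi lm n t s" "0 < s" "s < hgt lm n" using hstrip_eq by blast
  then have "twist lm c p \<in> hstrip lm n" using twist_phi phi_in_strip by simp
  then show ?thesis by (simp add: hstrip_iff)
next
  case False then show ?thesis using assms twist_other by auto
qed

lemma twist_inv: assumes "p \<in> ladder_X lm" shows "twist lm (-c) (twist lm c p) = p"
proof (cases "\<exists>n. p \<in> hstrip lm n")
  case True
  then obtain n where n: "p \<in> hstrip lm n" by blast
  then obtain t s where p: "p = phi lm n t s" "0 < s" "s < hgt lm n" using hstrip_eq by blast
  then show ?thesis using twist_phi by simp
next
  case False then show ?thesis using twist_other by auto
qed

lemma rep_nonneg: assumes "z \<in> reps lm y" "y \<in> ladder_X lm" shows "0 \<le> z$2"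
  using reps_cases[OF assms(1)]
proof
  assume zy: "z = y"
  show ?thesis using X_cases[OF assms(2)]
  proof (elim disjE exE)
    assume "y \<in> ladder_region lm" then show ?thesis using zy by (simp add: ladder_region_def)
  next
    fix n assume "y \<in> hedge lm n" then show ?thesis using zy S_nonneg by (simp add: hedge_iff)
  next
    fix n assume "y \<in> vedge lm n" then show ?thesis using zy S_nonneg[of "int n - 2"] by (simp add: vedge_iff)
  qed
next
  assume "glued lm y z"
  then show ?thesis
  proof (cases rule: glued_cases)
    case (1 n) then show ?thesis using S_nonneg by (simp add: hedge_iff)
  next
    case (2 n) then show ?thesis using S_nonneg[of "int n - 2"] by (simp add: vedge_iff)
  qed
qed

lemma sing_pos:
  assumes y: "y \<in> ladder_X lm" and d: "d \<in> reps lm y" and J: "-1 \<le> J" "d$2 = S J"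
  shows "(S (J - 2) < d$1 \<and> d$1 < S (J - 1)) \<or> (S (J - 1) < d$1 \<and> d$1 < S (J + 1))
       \<or> (S (J + 1) < d$1 \<and> d$1 < S (J + 2))"
  using reps_cases[OF d]
proof
  assume dy: "d = y"
  show ?thesis using X_cases[OF y]
  proof (elim disjE exE)
    assume "y \<in> ladder_region lm"
    then have "(\<exists>n::nat. S (int n - 1) < y$2 \<and> y$2 < S (int n) \<and> S (int n - 2) < y$1 \<and> y$1 < S (int n + 1))
       \<or> (\<exists>n::nat. y$2 = S (int n) \<and> S (int n - 1) < y$1 \<and> y$1 < S (int n + 1))" by (rule region_cases)
    then show ?thesis
    proof (elim disjE exE)
      fix n assume "S (int n - 1) < y$2 \<and> y$2 < S (int n) \<and> S (int n - 2) < y$1 \<and> y$1 < S (int n + 1)"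
      then show ?thesis using strip_not_slev[of n "y$2"] slev_S[of J] J dy by auto
    next
      fix n assume n: "y$2 = S (int n) \<and> S (int n - 1) < y$1 \<and> y$1 < S (int n + 1)"
      then have "int n = J" using S_inj[of "int n" J] J dy by simp
      then show ?thesis using n dy by auto
    qed
  next
    fix m assume m: "y \<in> hedge lm m"
    show ?thesis
    proof (cases m)
      case 0
      then have "S J = 0" using m dy J by (simp add: hedge_iff sseq_neg)
      then have "J = -1" using S_inj[of J "-1"] J by (simp add: sseq_neg)
      then show ?thesis using m dy 0 by (simp add: hedge_iff sseq_neg)
    next
      case (Suc k)
      then have "S (int k - 1) = S J" using m dy J by (simp add: hedge_iff)
      then have "J = int k - 1" using S_inj[of "int k - 1" J] J by simp
      then show ?thesis using m dy Suc by (simp add: hedge_iff)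
    qed
  next
    fix m assume "y \<in> vedge lm m" then show ?thesis using vedge_not_slev slev_S[of J] J dy by metis
  qed
next
  assume "glued lm y d"
  then show ?thesis
  proof (cases rule: glued_cases)
    case (1 n)
    then have "S (int n + 1) = S J" using J by (simp add: hedge_iff)
    then have "J = int n + 1" using S_inj[of "int n + 1" J] J by simp
    then show ?thesis using 1 by (simp add: hedge_iff)
  next
    case (2 n)
    then have "d$2 = y$2" by simp
    then show ?thesis using 2 vedge_not_slev[of y n] slev_S[of J] J by simp
  qed
qed

end

locale twist_loc = ladder +
  fixes c :: real
  assumes per: "\<And>n. \<exists>m::int. c * hgt lm n = of_int m * wid lm n"
begin

lemma locally_affine_twist: "locally_affine lm (mat2 1 c 0 1) (twist lm c)"
  unfolding locally_affine_def
proof (intro ballI)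
  fix x d assume x: "x \<in> ladder_X lm" and d: "d \<in> reps lm x"
  define B where "B = 2 + \<bar>c\<bar>"
  have B: "1 \<le> B" "\<And>v. norm (mat2 1 c 0 1 *v v) \<le> B * norm v" using shear_bound B_def by auto
  have Av: "mat2 1 c 0 1 *v v = pt (v$1 + c * v$2) (v$2)" for v :: "real^2" by (simp add: mat2_mult)
  have Av1: "\<bar>v$1 + c * v$2\<bar> \<le> B * norm v" for v :: "real^2"
    using B(2)[of v] norm_ge1[of "mat2 1 c 0 1 *v v"] by (simp add: Av)
  show "\<exists>e>0. \<forall>y\<in>ladder_X lm. \<forall>d'\<in>reps lm y. norm (d' - d) < e \<longrightarrow>
          (\<exists>r\<in>reps lm (twist lm c x). \<exists>r'\<in>reps lm (twist lm c y). r' - r = mat2 1 c 0 1 *v (d' - d))"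
  proof (cases "slev lm (x$2)")
    case False
    then obtain n where n: "S (int n - 1) < x$2" "x$2 < S (int n)" using nonsing_strip x by blast
    have d2: "d$2 = x$2" using rep_nonsing False d by blast
    define \<sigma> where "\<sigma> = d$2 - S (int n - 1)"
    have \<sigma>: "0 < \<sigma>" "\<sigma> < hgt lm n" using n d2 by (auto simp: \<sigma>_def hgt_eq)
    have xphi: "x = phi lm n (d$1 - S (int n - 2)) \<sigma>" using strip_rep[OF x d] n d2 \<sigma>_def by simp
    define u where "u = d$1 - S (int n - 2) + c * \<sigma>"
    have tx: "twist lm c x = phi lm n u \<sigma>" using xphi twist_phi[OF \<sigma>] u_def by simp
    obtain e1 where e1: "e1 > 0" "\<forall>t' s'. 0 < s' \<and> s' < hgt lm n \<and> \<bar>t' - u\<bar> < e1 \<longrightarrow>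
     (\<exists>r\<in>reps lm (phi lm n u \<sigma>). \<exists>r'\<in>reps lm (phi lm n t' s'). r' - r = pt (t' - u) (s' - \<sigma>))"
      using phi_local[OF \<sigma>] by blast
    define e where "e = min (min \<sigma> (hgt lm n - \<sigma>)) (e1 / B)"
    have e: "0 < e" using \<sigma> e1 B by (simp add: e_def)
    show ?thesis
    proof (intro exI[of _ e] conjI ballI impI)
      show "0 < e" by (rule e)
      fix y d' assume y: "y \<in> ladder_X lm" and d': "d' \<in> reps lm y" and nd: "norm (d' - d) < e"
      have v2: "\<bar>d'$2 - d$2\<bar> < min \<sigma> (hgt lm n - \<sigma>)"
        using norm_ge2[of "d' - d"] nd by (simp add: e_def)
      define \<sigma>' where "\<sigma>' = d'$2 - S (int n - 1)"
      have \<sigma>': "0 < \<sigma>'" "\<sigma>' < hgt lm n" using v2 by (auto simp: \<sigma>'_def \<sigma>_def)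
      have lev: "S (int n - 1) < d'$2" "d'$2 < S (int n)" using \<sigma>' by (auto simp: \<sigma>'_def hgt_eq)
      have yphi: "y = phi lm n (d'$1 - S (int n - 2)) \<sigma>'" using strip_rep[OF y d' lev] \<sigma>'_def by simp
      define u' where "u' = d'$1 - S (int n - 2) + c * \<sigma>'"
      have ty: "twist lm c y = phi lm n u' \<sigma>'" using yphi twist_phi[OF \<sigma>'] u'_def by simp
      have uu: "u' - u = (d' - d)$1 + c * (d' - d)$2" by (simp add: u'_def u_def \<sigma>'_def \<sigma>_def algebra_simps)
      have "\<bar>u' - u\<bar> \<le> B * norm (d' - d)" using Av1[of "d' - d"] uu by simp
      also have "\<dots> < B * (e1 / B)" using nd B by (intro mult_strict_left_mono) (auto simp: e_def)
      finally have "\<bar>u' - u\<bar> < e1" using B by simp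
      then obtain r r' where r: "r \<in> reps lm (phi lm n u \<sigma>)" "r' \<in> reps lm (phi lm n u' \<sigma>')"
        "r' - r = pt (u' - u) (\<sigma>' - \<sigma>)"
        using e1(2) \<sigma>' by blast
      have "pt (u' - u) (\<sigma>' - \<sigma>) = mat2 1 c 0 1 *v (d' - d)"
        using uu by (simp add: Av \<sigma>'_def \<sigma>_def)
      then show "\<exists>r\<in>reps lm (twist lm c x). \<exists>r'\<in>reps lm (twist lm c y). r' - r = mat2 1 c 0 1 *v (d' - d)"
        using r tx ty by metis
    qed
  next
    case True
    have notstrip: "\<forall>n. x \<notin> hstrip lm n" using True strip_not_slev by (auto simp: hstrip_iff)
    have tx: "twist lm c x = x" using twist_other[OF notstrip] .
    have d1: "d$1 = x$1" and dsl: "slev lm (d$2)" using rep_sing True d by blast+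
    obtain J where J: "-1 \<le> J" "d$2 = S J" using dsl unfolding slev_def by blast
    have pos: "(S (J - 2) < d$1 \<and> d$1 < S (J - 1)) \<or> (S (J - 1) < d$1 \<and> d$1 < S (J + 1))
       \<or> (S (J + 1) < d$1 \<and> d$1 < S (J + 2))" by (rule sing_pos[OF x d J])
    have m1: "S (J - 2) \<le> S (J - 1)" "S (J + 1) \<le> S (J + 2)" "S (J - 1) < S (J + 1)"
      using S_mono[of "J - 2" "J - 1"] S_mono[of "J + 1" "J + 2"] S_strict[of "J - 1" "J + 1"] J
      apply simp_all
      using S_m1 S_m2 \<open>-1 \<le> J\<close> S_strict[of "-1" "J + 1"] S_mono[of "J - 1" "-1"] sseq_neg
      by (cases "J = -1") auto
    define a1 where "a1 = S (J - 2)" define b1 where "b1 = S (J + 1)"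
    define a2 where "a2 = S (J - 1)" define b2 where "b2 = S (J + 2)"
    have ne: "d$1 \<noteq> a1" "d$1 \<noteq> b1" "d$1 \<noteq> a2" "d$1 \<noteq> b2"
      using pos m1 by (auto simp: a1_def b1_def a2_def b2_def)
    define elev where "elev = min (S (J + 1) - S J) (if 0 \<le> J then S J - S (J - 1) else 1)"
    have elev: "0 < elev" using S_strict[of J "J+1"] S_strict[of "J - 1" J] J by (simp add: elev_def)
    define e where "e = min (min (min \<bar>d$1 - a1\<bar> \<bar>d$1 - b1\<bar>) (min \<bar>d$1 - a2\<bar> \<bar>d$1 - b2\<bar>) / B) elev"
    have e: "0 < e" using ne elev B by (simp add: e_def)
    show ?thesis
    proof (intro exI[of _ e] conjI ballI impI)
      show "0 < e" by (rule e)
      fix y d' assume y: "y \<in> ladder_X lm" and d': "d' \<in> reps lm y" and nd: "norm (d' - d) < e"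
      define v where "v = d' - d"
      define M where "M = min (min \<bar>d$1 - a1\<bar> \<bar>d$1 - b1\<bar>) (min \<bar>d$1 - a2\<bar> \<bar>d$1 - b2\<bar>)"
      have eM: "e \<le> M / B" unfolding e_def M_def by (rule min.cobounded1)
      have nv: "norm v < M / B" using nd eM v_def by simp
      have BM: "B * (M / B) = M" using B by simp
      have v2: "\<bar>v$2\<bar> < elev" using norm_ge2[of v] nd by (simp add: e_def v_def)
      have v1: "\<bar>v$1\<bar> < min (min \<bar>d$1 - a1\<bar> \<bar>d$1 - b1\<bar>) (min \<bar>d$1 - a2\<bar> \<bar>d$1 - b2\<bar>)"
      proof -
        have "\<bar>v$1\<bar> \<le> norm v" by (rule norm_ge1)
        also have "\<dots> \<le> B * norm v" using B mult_right_mono[of 1 B "norm v"] by simp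
        also have "\<dots> < B * (M / B)"
          using nv B by (intro mult_strict_left_mono) auto
        finally show ?thesis using BM M_def by simp
      qed
      have Av1': "\<bar>v$1 + c * v$2\<bar> < min (min \<bar>d$1 - a1\<bar> \<bar>d$1 - b1\<bar>) (min \<bar>d$1 - a2\<bar> \<bar>d$1 - b2\<bar>)"
      proof -
        have "\<bar>v$1 + c * v$2\<bar> \<le> B * norm v" by (rule Av1)
        also have "\<dots> < B * (M / B)"
          using nv B by (intro mult_strict_left_mono) auto
        finally show ?thesis using BM M_def by simp
      qed
      have target: "d + mat2 1 c 0 1 *v (d' - d) = pt (d$1 + v$1 + c * v$2) (d'$2)"
        by (rule vec2_eqI) (simp_all add: Av v_def)
      have goal: "d + mat2 1 c 0 1 *v (d' - d) \<in> reps lm (twist lm c y)"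
      proof (cases "d'$2 = d$2")
        case True
        then have "slev lm (y$2)" using rep_slev_iff[OF d'] dsl by simp
        then have "\<forall>n. y \<notin> hstrip lm n" using strip_not_slev by (auto simp: hstrip_iff)
        then have "twist lm c y = y" by (rule twist_other)
        moreover have "d + mat2 1 c 0 1 *v (d' - d) = d'"
          using True by (intro vec2_eqI) (simp_all add: Av)
        ultimately show ?thesis using d' by simp
      next
        case False
        show ?thesis
        proof (cases "d$2 < d'$2")
          case True
          define k where "k = nat (J + 1)"
          have kJ: "int k = J + 1" using J by (simp add: k_def)
          have lev: "S (int k - 1) < d'$2" "d'$2 < S (int k)"
            using True v2 J kJ by (auto simp: elev_def v_def)
          have sr: "S (int k - 2) \<le> d'$1 \<and> d'$1 \<le> S (int k + 1) \<and>
              y = phi lm k (d'$1 - S (int k - 2)) (d'$2 - S (int k - 1))"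
            by (rule strip_rep[OF y d' lev])
          have in2: "a2 < d$1" "d$1 < b2"
            using sr kJ v1 ne unfolding v_def a2_def b2_def
            by (auto simp: algebra_simps abs_if split: if_splits)
          define \<sigma>' where "\<sigma>' = d'$2 - S (int k - 1)"
          have \<sigma>': "0 < \<sigma>'" "\<sigma>' < hgt lm k" using lev by (auto simp: \<sigma>'_def hgt_eq)
          have "twist lm c y = phi lm k (d'$1 - S (int k - 2) + c * \<sigma>') \<sigma>'"
            using sr twist_phi[OF \<sigma>'] \<sigma>'_def by simp
          moreover have "d'$1 - S (int k - 2) + c * \<sigma>' = d$1 - a2 + (v$1 + c * v$2)"
            using kJ J by (simp add: \<sigma>'_def a2_def v_def algebra_simps)
          moreover have "rr (wid lm k) (d$1 - a2 + (v$1 + c * v$2)) = d$1 - a2 + (v$1 + c * v$2)"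
          proof (rule rr_unique[where j=0])
            show "0 < wid lm k" by (rule wid_pos)
            show "0 < d$1 - a2 + (v$1 + c * v$2)" using in2 Av1' by (auto simp: abs_if split: if_splits)
            have "wid lm k = b2 - a2" using kJ by (simp add: wid_def a2_def b2_def add.commute)
            then show "d$1 - a2 + (v$1 + c * v$2) \<le> wid lm k" using in2 Av1' by (auto simp: abs_if split: if_splits)
          qed simp
          ultimately have "twist lm c y = phi lm k (d$1 - a2 + (v$1 + c * v$2)) \<sigma>'"
            and rrT: "rr (wid lm k) (d$1 - a2 + (v$1 + c * v$2)) = d$1 - a2 + (v$1 + c * v$2)" by simp_all
          then have "twist lm c y = pt (S (int k - 2) + (d$1 - a2 + (v$1 + c * v$2))) (S (int k - 1) + \<sigma>')"
            by (simp only: phi_def)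
          then have "twist lm c y = pt (d$1 + v$1 + c * v$2) (d'$2)"
            using kJ by (simp add: \<sigma>'_def a2_def add.assoc)
          then show ?thesis using target self_rep by metis
        next
          case False
          then have lt: "d'$2 < d$2" using \<open>d'$2 \<noteq> d$2\<close> by simp
          have J0: "0 \<le> J"
          proof (rule ccontr)
            assume "\<not> 0 \<le> J" then have "J = -1" using J by simp
            then have "d$2 = 0" using J by (simp add: sseq_neg)
            then show False using lt rep_nonneg[OF d' y] by simp
          qed
          define k where "k = nat J"
          have kJ: "int k = J" using J0 by (simp add: k_def)
          have lev: "S (int k - 1) < d'$2" "d'$2 < S (int k)"
            using lt v2 J kJ J0 by (auto simp: elev_def v_def)
          have sr: "S (int k - 2) \<le> d'$1 \<and> d'$1 \<le> S (int k + 1) \<and>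
              y = phi lm k (d'$1 - S (int k - 2)) (d'$2 - S (int k - 1))"
            by (rule strip_rep[OF y d' lev])
          have in1: "a1 < d$1" "d$1 < b1"
            using sr kJ v1 ne unfolding v_def a1_def b1_def
            by (auto simp: algebra_simps abs_if split: if_splits)
          define \<sigma>' where "\<sigma>' = d'$2 - S (int k - 1)"
          have \<sigma>': "0 < \<sigma>'" "\<sigma>' < hgt lm k" using lev by (auto simp: \<sigma>'_def hgt_eq)
          obtain m where m: "c * hgt lm k = of_int m * wid lm k" using per by blast
          have "twist lm c y = phi lm k (d'$1 - S (int k - 2) + c * \<sigma>') \<sigma>'"
            using sr twist_phi[OF \<sigma>'] \<sigma>'_def by simp
          moreover have "d'$1 - S (int k - 2) + c * \<sigma>' = (d$1 - a1 + (v$1 + c * v$2)) + of_int m * wid lm k"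
            using kJ J m by (simp add: \<sigma>'_def a1_def v_def hgt_eq algebra_simps)
          moreover have "rr (wid lm k) (d$1 - a1 + (v$1 + c * v$2)) = d$1 - a1 + (v$1 + c * v$2)"
          proof (rule rr_unique[where j=0])
            show "0 < wid lm k" by (rule wid_pos)
            show "0 < d$1 - a1 + (v$1 + c * v$2)" using in1 Av1' by (auto simp: abs_if split: if_splits)
            have "wid lm k = b1 - a1" using kJ by (simp add: wid_def a1_def b1_def)
            then show "d$1 - a1 + (v$1 + c * v$2) \<le> wid lm k" using in1 Av1' by (auto simp: abs_if split: if_splits)
          qed simp
          ultimately have "twist lm c y = phi lm k (d$1 - a1 + (v$1 + c * v$2)) \<sigma>'"
            and rrT: "rr (wid lm k) (d$1 - a1 + (v$1 + c * v$2)) = d$1 - a1 + (v$1 + c * v$2)"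
            using phi_shift by simp_all
          then have "twist lm c y = pt (S (int k - 2) + (d$1 - a1 + (v$1 + c * v$2))) (S (int k - 1) + \<sigma>')"
            by (simp only: phi_def)
          then have "twist lm c y = pt (d$1 + v$1 + c * v$2) (d'$2)"
            using kJ by (simp add: \<sigma>'_def a1_def add.assoc)
          then show ?thesis using target self_rep by metis
        qed
      qed
      show "\<exists>r\<in>reps lm (twist lm c x). \<exists>r'\<in>reps lm (twist lm c y). r' - r = mat2 1 c 0 1 *v (d' - d)"
        using goal d tx by (intro bexI[of _ d] bexI[of _ "d + mat2 1 c 0 1 *v (d' - d)"]) auto
    qed
  qed
qed

end


lemma lambda_props:
  fixes k l :: int
  assumes "0 < l" "l < k"
  shows "0 < ladder_lambda k l \<and>
    real_of_int k * (ladder_lambda k l + 1) = real_of_int l * (inverse (ladder_lambda k l) + 1 + ladder_lambda k l)"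
proof -
  define a where "a = real_of_int (k - l)"
  define L where "L = real_of_int l"
  have a: "0 < a" "0 < L" using assms by (auto simp: a_def L_def)
  have eqv: "real_of_int k * (x + 1) = real_of_int l * (inverse x + 1 + x) \<longleftrightarrow> a * x^2 + a * x - L = 0"
    if x: "0 < x" for x :: real
  proof -
    have e1: "x * (real_of_int k * (x + 1)) = real_of_int k * x^2 + real_of_int k * x"
      by (simp add: algebra_simps power2_eq_square)
    have e2: "x * (real_of_int l * (inverse x + 1 + x)) = L + L * x + L * x^2"
      using x unfolding L_def by (simp add: field_simps power2_eq_square)
    have e3: "real_of_int k * x^2 + real_of_int k * x - (L + L * x + L * x^2) = a * x^2 + a * x - L"
      by (simp add: a_def L_def algebra_simps)
    have "real_of_int k * (x + 1) = real_of_int l * (inverse x + 1 + x) \<longleftrightarrow>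
          x * (real_of_int k * (x + 1)) = x * (real_of_int l * (inverse x + 1 + x))"
      using x by simp
    also have "\<dots> \<longleftrightarrow> a * x^2 + a * x - L = 0" using e1 e2 e3 by linarith
    finally show ?thesis .
  qed
  define q where "q = sqrt (a^2 + 4 * a * L)"
  have q2: "q^2 = a^2 + 4 * a * L" unfolding q_def using a by simp
  have qa: "a < q"
  proof -
    have "sqrt (a^2) < sqrt (a^2 + 4 * a * L)" using a by (intro real_sqrt_less_mono) simp
    then show ?thesis using a by (simp add: q_def)
  qed
  define x0 where "x0 = (q - a) / (2 * a)"
  have x0: "0 < x0" using qa a by (simp add: x0_def)
  have qx: "q = a + 2 * a * x0" using a by (simp add: x0_def field_simps)
  have "4 * a * (a * x0^2 + a * x0) = q^2 - a^2" by (simp add: qx power2_eq_square algebra_simps)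
  then have "4 * a * (a * x0^2 + a * x0) = 4 * a * L" using q2 by simp
  then have root: "a * x0^2 + a * x0 - L = 0" using a by simp
  have ex: "0 < x0 \<and> real_of_int k * (x0 + 1) = real_of_int l * (inverse x0 + 1 + x0)"
    using x0 root eqv[OF x0] by simp
  have uniq: "y = x0" if y: "0 < y \<and> real_of_int k * (y + 1) = real_of_int l * (inverse y + 1 + y)" for y
  proof -
    have y0: "0 < y" using y by simp
    have ry: "a * y^2 + a * y - L = 0" using y eqv[OF y0] by simp
    have "a * (y - x0) * (y + x0 + 1) = 0" using ry root by (simp add: algebra_simps power2_eq_square)
    moreover have "y + x0 + 1 \<noteq> 0" using y x0 by simp
    ultimately show ?thesis using a by simp
  qed
  have "ladder_lambda k l = x0"
    unfolding ladder_lambda_def by (rule the_equality) (use ex uniq in blast)+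
  then show ?thesis using ex by simp
qed
context ladder begin

lemma hgt0: "hgt lm 0 = 1" by (simp add: hgt_def sseq_def)
lemma wid0: "wid lm 0 = 1 + lm"
proof -
  have "S 1 = S 0 + lm" using S_diff[of 1] by simp
  moreover have "S 0 = 1" by (simp add: sseq_def)
  ultimately show ?thesis by (simp add: wid_def sseq_neg)
qed
lemma hgtn: "hgt lm n = lm ^ n" using S_diff[of "int n"] by (simp add: hgt_def)
lemma widn: assumes "1 \<le> n" shows "wid lm n = lm ^ (n - 1) + lm ^ n + lm ^ (n + 1)"
proof -
  have "S (int n + 1) - S (int n) = lm ^ (n + 1)" using S_diff[of "int n + 1"] by (simp add: nat_add_distrib)
  moreover have "S (int n) - S (int n - 1) = lm ^ n" using S_diff[of "int n"] by simp
  moreover have "S (int n - 1) - S (int n - 2) = lm ^ (n - 1)"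
    using S_diff[of "int n - 1"] assms by (simp add: nat_diff_distrib)
  ultimately show ?thesis by (simp add: wid_def)
qed

end

theorem mainTheorem6:
  fixes k l :: int
  assumes "0 < l" and "l < k" and "coprime k l"
  defines "lm \<equiv> ladder_lambda k l"
  shows "(\<forall>C C'. max_hcyl lm C \<and> max_hcyl lm C' \<and> C \<noteq> C' \<longrightarrow> C \<inter> C' = {})
    \<and> \<Union>{ladder_top lm closure_of C | C. max_hcyl lm C} = ladder_X lm
    \<and> {C. max_hcyl lm C} = range (hstrip lm)
    \<and> (mat2 1 (real_of_int k * (1 + lm)) 0 1 \<in> veech_group lm
        \<or> - mat2 1 (real_of_int k * (1 + lm)) 0 1 \<in> veech_group lm)
    \<and> (\<exists>f. affine_homeo lm (mat2 1 (real_of_int k * (1 + lm)) 0 1) f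
         \<and> dehn_twist_power lm f k (hstrip lm 0) (1 + lm) 1
         \<and> (\<forall>n::nat. 1 \<le> n \<longrightarrow>
              dehn_twist_power lm f l (hstrip lm n)
                (lm ^ (n - 1) + lm ^ n + lm ^ (n + 1)) (lm ^ n)))"
proof -
  have lp: "0 < lm" "real_of_int k * (lm + 1) = real_of_int l * (inverse lm + 1 + lm)"
    using lambda_props[OF assms(1,2)] unfolding lm_def by auto
  interpret ladder lm by unfold_locales (rule lp(1))
  define c where "c = real_of_int k * (1 + lm)"
  have keq: "c * lm = real_of_int l * (1 + lm + lm^2)"
  proof -
    have "c * lm = real_of_int l * (inverse lm + 1 + lm) * lm" using lp(2) by (simp add: c_def add.commute)
    also have "\<dots> = real_of_int l * (1 + lm + lm^2)" using lp(1) by (simp add: field_simps power2_eq_square)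
    finally show ?thesis .
  qed
  have cw: "c * hgt lm n = real_of_int l * wid lm n" if n1: "1 \<le> n" for n
  proof -
    obtain j where j: "n = Suc j" using n1 by (cases n) auto
    have "c * hgt lm n = (c * lm) * lm ^ j" using j by (simp add: hgtn)
    also have "\<dots> = real_of_int l * wid lm n" using keq j by (simp add: widn algebra_simps power2_eq_square)
    finally show ?thesis .
  qed
  have c0: "c * hgt lm 0 = real_of_int k * wid lm 0" by (simp add: c_def hgt0 wid0)
  have per: "\<exists>m::int. c' * hgt lm n = of_int m * wid lm n" if "c' = c \<or> c' = -c" for c' n
  proof (cases "n = 0")
    case True then show ?thesis using that c0 by (metis minus_mult_left of_int_minus)
  next
    case False then show ?thesis using that cw[of n] by (metis less_one linorder_not_less minus_mult_left of_int_minus)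
  qed
  interpret T1: twist_loc lm c by unfold_locales (use per in blast)
  interpret T2: twist_loc lm "-c"
  proof
    fix n show "\<exists>m::int. - c * hgt lm n = of_int m * wid lm n" using per[of "-c" n] by simp
  qed
  let ?A = "mat2 1 c 0 1"
  let ?f = "twist lm c"
  have la1: "locally_affine lm ?A ?f" by (rule T1.locally_affine_twist)
  have la2: "locally_affine lm (mat2 1 (-c) 0 1) (twist lm (-c))" by (rule T2.locally_affine_twist)
  have B: "0 < 2 + \<bar>c'\<bar>" for c' :: real by simp
  have cont1: "continuous_map (ladder_top lm) (ladder_top lm) ?f"
    using locally_affine_cont[OF la1 _ _ B] twist_X shear_bound by blast
  have cont2: "continuous_map (ladder_top lm) (ladder_top lm) (twist lm (-c))"
    using locally_affine_cont[OF la2 _ _ B] twist_X shear_bound by blast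
  have inv1: "\<forall>x\<in>topspace (ladder_top lm). twist lm (-c) (?f x) = x"
    using twist_inv by (simp add: topspace_ladder)
  have inv2: "\<forall>x\<in>topspace (ladder_top lm). ?f (twist lm (-c) x) = x"
    using twist_inv[of _ "-c"] by (simp add: topspace_ladder)
  have homeo: "homeomorphic_map (ladder_top lm) (ladder_top lm) ?f"
    unfolding homeomorphic_map_maps homeomorphic_maps_def using cont1 cont2 inv1 inv2 by blast
  have aff: "affine_homeo lm ?A ?f" unfolding affine_homeo_def using homeo la1 by blast
  have veech: "?A \<in> veech_group lm" unfolding veech_group_def using aff by (auto simp: det_mat2)
  have dt0: "dehn_twist_power lm ?f k (hstrip lm 0) (1 + lm) 1"
    unfolding dehn_twist_power_def
  proof (intro exI[of _ "phi lm 0"] conjI allI impI)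
    show "hcyl_param lm (phi lm 0) (1 + lm) 1 (hstrip lm 0)" using strip_hcyl[of 0] by (simp add: wid0 hgt0)
    fix t s :: real assume "0 < s \<and> s < 1"
    then show "?f (phi lm 0 t s) = phi lm 0 (t + real_of_int k * (1 + lm) * s / 1) s"
      using twist_phi[of s 0 c t] by (simp add: hgt0 c_def)
  qed
  have dtn: "dehn_twist_power lm ?f l (hstrip lm n) (lm ^ (n - 1) + lm ^ n + lm ^ (n + 1)) (lm ^ n)"
    if n: "1 \<le> n" for n
    unfolding dehn_twist_power_def
  proof (intro exI[of _ "phi lm n"] conjI allI impI)
    show "hcyl_param lm (phi lm n) (lm ^ (n - 1) + lm ^ n + lm ^ (n + 1)) (lm ^ n) (hstrip lm n)"
      using strip_hcyl[of n] by (simp add: widn[OF n] hgtn)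
    fix t s :: real assume s: "0 < s \<and> s < lm ^ n"
    have "c = real_of_int l * (lm ^ (n - 1) + lm ^ n + lm ^ (n + 1)) / lm ^ n"
      using cw[OF n] lp(1) by (simp add: widn[OF n] hgtn field_simps)
    then have "c * s = real_of_int l * (lm ^ (n - 1) + lm ^ n + lm ^ (n + 1)) * s / lm ^ n" by simp
    then show "?f (phi lm n t s) = phi lm n (t + real_of_int l * (lm ^ (n - 1) + lm ^ n + lm ^ (n + 1)) * s / lm ^ n) s"
      using twist_phi[of s n c t] s by (simp add: hgtn)
  qed
  have p1: "\<forall>C C'. max_hcyl lm C \<and> max_hcyl lm C' \<and> C \<noteq> C' \<longrightarrow> C \<inter> C' = {}"
  proof (intro allI impI)
    fix C C' assume h: "max_hcyl lm C \<and> max_hcyl lm C' \<and> C \<noteq> C'"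
    then obtain n m where nm: "C = hstrip lm n" "C' = hstrip lm m" using max_hcyl_iff by meson
    then have "n \<noteq> m" using h by blast
    then show "C \<inter> C' = {}" using nm hstrip_disj by simp
  qed
  have p3: "{C. max_hcyl lm C} = range (hstrip lm)" using max_hcyl_iff by auto
  show ?thesis
    unfolding c_def[symmetric]
  proof (intro conjI)
    show "\<exists>f. affine_homeo lm ?A f \<and> dehn_twist_power lm f k (hstrip lm 0) (1 + lm) 1 \<and>
        (\<forall>n::nat. 1 \<le> n \<longrightarrow> dehn_twist_power lm f l (hstrip lm n)
                (lm ^ (n - 1) + lm ^ n + lm ^ (n + 1)) (lm ^ n))"
      using aff dt0 dtn by blast
  qed (use p1 closure_union p3 veech in auto)
qed

end
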